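(* Let $\mathcal V$ be a complex topological vector space and $\mathcal D\subseteq\mathcal V_{\rm nc}$ a noncommutative set such that (P2) $UaU^*\in\mathcal D_n$ for all $a\in\mathcal D_n$ and unitary $U\in\mathbb C^{n\times n}$, and (P3) if $\begin{bmatrix}a&0\\0&c\end{bmatrix}\in\mathcal D_{n+m}$ with $a\in\mathcal V^{n\times n},c\in\mathcal V^{m\times m}$, then $a\in\mathcal D_n,c\in\mathcal D_m$. Then for any $n,m,k\in\mathbb N$, $a\in\mathcal D_n$, $c\in\mathcal D_m$, $b\in\mathcal V^{n\times m}$ and $Z\in\mathbb C^{k\times k}$, $\delta_{\mathcal D}(I_k\otimes a,I_k\otimes c)(Z\otimes b)=\delta_{\mathcal D}(a,c)(b)\,\|ZZ^*\|^{1/2}$.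
   Context: A noncommutative set is a family $\mathcal D=(\mathcal D_n)$, $\mathcal D_n\subseteq\mathcal V^{n\times n}$, closed under direct sums $\begin{bmatrix}a&0\\0&c\end{bmatrix}$. $I_k\otimes a$ is the $k$-fold block-diagonal direct sum of $a$, and $Z\otimes b\in\mathcal V^{kn\times km}$ is the block matrix $[Z_{ij}b]_{i,j}$. For $a\in\mathcal D_n,c\in\mathcal D_m,b\in\mathcal V^{n\times m}$, $\delta_{\mathcal D}(a,c)(b)=\big[\sup\{t\in[0,+\infty]\colon\begin{bmatrix}a&sb\\0&c\end{bmatrix}\in\mathcal D_{n+m}\ \forall s\in[0,t]\}\big]^{-1}\in[0,+\infty]$, with $1/0=+\infty$, $1/\infty=0$ and the convention $0\cdot(+\infty)=+\infty$. *)

theory Defs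
  imports "HOL-Analysis.Analysis"
begin

text \<open>Matrices of arbitrary size over a type are represented as functions
  nat \<Rightarrow> nat \<Rightarrow> 'a whose entries vanish outside the index block.\<close>

definition mats :: "nat \<Rightarrow> nat \<Rightarrow> (nat \<Rightarrow> nat \<Rightarrow> 'a::zero) set" where
  "mats n m = {a. \<forall>i j. (n \<le> i \<or> m \<le> j) \<longrightarrow> a i j = 0}"

definition ctvs :: "(complex \<Rightarrow> 'v::{ab_group_add,topological_space} \<Rightarrow> 'v) \<Rightarrow> bool" where
  "ctvs sc \<longleftrightarrow> vector_space sc
     \<and> continuous_on UNIV (\<lambda>p::'v \<times> 'v. fst p + snd p)
     \<and> continuous_on UNIV (\<lambda>p::complex \<times> 'v. sc (fst p) (snd p))"

definition upper :: "nat \<Rightarrow> nat \<Rightarrow> (nat \<Rightarrow> nat \<Rightarrow> 'a::zero) \<Rightarrow> (nat \<Rightarrow> nat \<Rightarrow> 'a)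
    \<Rightarrow> (nat \<Rightarrow> nat \<Rightarrow> 'a) \<Rightarrow> nat \<Rightarrow> nat \<Rightarrow> 'a" where
  "upper n m a b c = (\<lambda>i j.
     if i < n \<and> j < n then a i j
     else if i < n \<and> n \<le> j \<and> j < n + m then b i (j - n)
     else if n \<le> i \<and> i < n + m \<and> n \<le> j \<and> j < n + m then c (i - n) (j - n)
     else 0)"

definition dsum :: "nat \<Rightarrow> nat \<Rightarrow> (nat \<Rightarrow> nat \<Rightarrow> 'a::zero) \<Rightarrow> (nat \<Rightarrow> nat \<Rightarrow> 'a)
    \<Rightarrow> nat \<Rightarrow> nat \<Rightarrow> 'a" where
  "dsum n m a c = upper n m a (\<lambda>_ _. 0) c"

definition nc_set :: "(nat \<Rightarrow> (nat \<Rightarrow> nat \<Rightarrow> 'a::zero) set) \<Rightarrow> bool" where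
  "nc_set D \<longleftrightarrow> (\<forall>n. D n \<subseteq> mats n n) \<and>
     (\<forall>n m a c. 1 \<le> n \<longrightarrow> 1 \<le> m \<longrightarrow> a \<in> D n \<longrightarrow> c \<in> D m \<longrightarrow> dsum n m a c \<in> D (n + m))"

definition unitary_mat :: "nat \<Rightarrow> (nat \<Rightarrow> nat \<Rightarrow> complex) \<Rightarrow> bool" where
  "unitary_mat n U \<longleftrightarrow> (\<forall>i<n. \<forall>j<n. (\<Sum>l<n. U i l * cnj (U j l)) = (if i = j then 1 else 0))"

definition conj_by :: "(complex \<Rightarrow> 'v::ab_group_add \<Rightarrow> 'v) \<Rightarrow> nat \<Rightarrow> (nat \<Rightarrow> nat \<Rightarrow> complex) \<Rightarrow> (nat \<Rightarrow> nat \<Rightarrow> 'v)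
    \<Rightarrow> nat \<Rightarrow> nat \<Rightarrow> 'v" where
  "conj_by sc n U a = (\<lambda>i j. if i < n \<and> j < n then
      (\<Sum>p<n. \<Sum>q<n. sc (U i p * cnj (U j q)) (a p q)) else 0)"

definition P2 :: "(complex \<Rightarrow> 'v::ab_group_add \<Rightarrow> 'v) \<Rightarrow> (nat \<Rightarrow> (nat \<Rightarrow> nat \<Rightarrow> 'v) set) \<Rightarrow> bool" where
  "P2 sc D \<longleftrightarrow> (\<forall>n a U. 1 \<le> n \<longrightarrow> a \<in> D n \<longrightarrow> unitary_mat n U \<longrightarrow> conj_by sc n U a \<in> D n)"

definition P3 :: "(nat \<Rightarrow> (nat \<Rightarrow> nat \<Rightarrow> 'a::zero) set) \<Rightarrow> bool" where
  "P3 D \<longleftrightarrow> (\<forall>n m a c. 1 \<le> n \<longrightarrow> 1 \<le> m \<longrightarrow> a \<in> mats n n \<longrightarrow> c \<in> mats m m \<longrightarrow>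
      dsum n m a c \<in> D (n + m) \<longrightarrow> a \<in> D n \<and> c \<in> D m)"

text \<open>\<delta>_D(a,c)(b) with values in [0,\<infinity>] (ennreal); inverse 0 = \<infinity>, inverse \<infinity> = 0.\<close>
definition delta :: "(complex \<Rightarrow> 'v::ab_group_add \<Rightarrow> 'v) \<Rightarrow> (nat \<Rightarrow> (nat \<Rightarrow> nat \<Rightarrow> 'v) set) \<Rightarrow> nat \<Rightarrow> nat
    \<Rightarrow> (nat \<Rightarrow> nat \<Rightarrow> 'v) \<Rightarrow> (nat \<Rightarrow> nat \<Rightarrow> 'v) \<Rightarrow> (nat \<Rightarrow> nat \<Rightarrow> 'v) \<Rightarrow> ennreal" where
  "delta sc D n m a c b = inverse (Sup {t::ennreal. \<forall>s::real. 0 \<le> s \<and> ennreal s \<le> t \<longrightarrow>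
       upper n m a (\<lambda>i j. sc (complex_of_real s) (b i j)) c \<in> D (n + m)})"

definition emult :: "ennreal \<Rightarrow> ennreal \<Rightarrow> ennreal" where
  "emult x y = (if x = 0 \<and> y = top then top else x * y)"

definition kron_id :: "nat \<Rightarrow> nat \<Rightarrow> (nat \<Rightarrow> nat \<Rightarrow> 'a::zero) \<Rightarrow> nat \<Rightarrow> nat \<Rightarrow> 'a" where
  "kron_id k n a = (\<lambda>i j. if i < k * n \<and> j < k * n \<and> i div n = j div n
      then a (i mod n) (j mod n) else 0)"

definition kron :: "(complex \<Rightarrow> 'v::ab_group_add \<Rightarrow> 'v) \<Rightarrow> nat \<Rightarrow> nat \<Rightarrow> nat \<Rightarrow> (nat \<Rightarrow> nat \<Rightarrow> complex) \<Rightarrow> (nat \<Rightarrow> nat \<Rightarrow> 'v)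
    \<Rightarrow> nat \<Rightarrow> nat \<Rightarrow> 'v" where
  "kron sc k n m Z b = (\<lambda>i j. if i < k * n \<and> j < k * m
      then sc (Z (i div n) (j div m)) (b (i mod n) (j mod m)) else 0)"

definition cvnorm :: "nat \<Rightarrow> (nat \<Rightarrow> complex) \<Rightarrow> real" where
  "cvnorm k x = sqrt (\<Sum>i<k. (cmod (x i))\<^sup>2)"

definition mat_vec :: "nat \<Rightarrow> (nat \<Rightarrow> nat \<Rightarrow> complex) \<Rightarrow> (nat \<Rightarrow> complex) \<Rightarrow> nat \<Rightarrow> complex" where
  "mat_vec k M x = (\<lambda>i. \<Sum>j<k. M i j * x j)"

definition opnorm :: "nat \<Rightarrow> (nat \<Rightarrow> nat \<Rightarrow> complex) \<Rightarrow> real" where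
  "opnorm k M = Sup {cvnorm k (mat_vec k M x) | x. cvnorm k x \<le> 1}"

definition mult_adj :: "nat \<Rightarrow> (nat \<Rightarrow> nat \<Rightarrow> complex) \<Rightarrow> nat \<Rightarrow> nat \<Rightarrow> complex" where
  "mult_adj k Z = (\<lambda>i j. \<Sum>l<k. Z i l * cnj (Z j l))"

end

theory Submission
  imports Defs
begin


definition mm :: "nat \<Rightarrow> (nat\<Rightarrow>nat\<Rightarrow>complex) \<Rightarrow> (nat\<Rightarrow>nat\<Rightarrow>complex) \<Rightarrow> nat\<Rightarrow>nat\<Rightarrow>complex" where
  "mm k A B = (\<lambda>i j. if i<k \<and> j<k then \<Sum>l<k. A i l * B l j else 0)"
definition ad :: "(nat\<Rightarrow>nat\<Rightarrow>complex) \<Rightarrow> nat\<Rightarrow>nat\<Rightarrow>complex" where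
  "ad A = (\<lambda>i j. cnj (A j i))"
definition idm :: "nat \<Rightarrow> nat\<Rightarrow>nat\<Rightarrow>complex" where
  "idm k = (\<lambda>i j. if i<k \<and> i=j then 1 else 0)"
definition uni :: "nat \<Rightarrow> (nat\<Rightarrow>nat\<Rightarrow>complex) \<Rightarrow> bool" where
  "uni k U \<longleftrightarrow> U \<in> mats k k \<and> mm k U (ad U) = idm k \<and> mm k (ad U) U = idm k"
definition mv :: "nat \<Rightarrow> (nat\<Rightarrow>nat\<Rightarrow>complex) \<Rightarrow> (nat \<Rightarrow> complex) \<Rightarrow> nat \<Rightarrow> complex" where
  "mv k M x = (\<lambda>i. if i<k then \<Sum>j<k. M i j * x j else 0)"
definition ip :: "nat \<Rightarrow> (nat \<Rightarrow> complex) \<Rightarrow> (nat \<Rightarrow> complex) \<Rightarrow> complex" where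
  "ip k x y = (\<Sum>i<k. x i * cnj (y i))"
definition nsq :: "nat \<Rightarrow> (nat \<Rightarrow> complex) \<Rightarrow> real" where
  "nsq k x = (\<Sum>i<k. (cmod (x i))\<^sup>2)"

lemma mats_iff: "A \<in> mats n m \<longleftrightarrow> (\<forall>i j. (n \<le> i \<or> m \<le> j) \<longrightarrow> A i j = 0)"
  by (simp add: mats_def)

lemma mm_mats[simp]: "mm k A B \<in> mats k k"
  by (simp add: mats_def mm_def)
lemma idm_mats[simp]: "idm k \<in> mats k k"
  by (simp add: mats_def idm_def)
lemma ad_mats: "A \<in> mats k k \<Longrightarrow> ad A \<in> mats k k"
  by (simp add: mats_def ad_def)
lemma ad_ad[simp]: "ad (ad A) = A"
  by (simp add: ad_def)
lemma ad_idm[simp]: "ad (idm k) = idm k"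
  by (auto simp: ad_def idm_def fun_eq_iff)

lemma mm_assoc: "mm k (mm k A B) C = mm k A (mm k B C)"
proof -
  have "(\<Sum>l<k. (\<Sum>p<k. A i p * B p l) * C l j) = (\<Sum>p<k. A i p * (\<Sum>l<k. B p l * C l j))" for i j
    unfolding sum_distrib_left sum_distrib_right by (subst sum.swap) (simp add: mult.assoc)
  then show ?thesis by (auto simp: mm_def fun_eq_iff intro!: sum.cong)
qed

lemma mm_idm_left: assumes "A \<in> mats k k" shows "mm k (idm k) A = A"
proof -
  have "(\<Sum>l<k. (if i < k \<and> i = l then 1 else 0) * A l j) = A i j" if "i<k" for i j
    using that by (simp add: if_distrib[of "\<lambda>x. x * _"] sum.delta cong: if_cong)
  then show ?thesis using assms by (auto simp: mm_def idm_def mats_def fun_eq_iff)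
qed
lemma mm_idm_right: assumes "A \<in> mats k k" shows "mm k A (idm k) = A"
proof -
  have "(\<Sum>l<k. A i l * (if l < k \<and> l = j then 1 else 0)) = A i j" if "j<k" for i j
    using that by (simp add: if_distrib[of "\<lambda>x. _ * x"] sum.delta' cong: if_cong)
  then show ?thesis using assms by (auto simp: mm_def idm_def mats_def fun_eq_iff)
qed

lemma ad_mm: "ad (mm k A B) = mm k (ad B) (ad A)"
  by (auto simp: mm_def ad_def fun_eq_iff mult.commute)

lemma uni_mats: "uni k U \<Longrightarrow> U \<in> mats k k" by (simp add: uni_def)

lemma uni_ad: "uni k U \<Longrightarrow> uni k (ad U)"
  by (auto simp: uni_def ad_mats)

lemma uni_mm: assumes "uni k U" "uni k V" shows "uni k (mm k U V)"
proof -
  have "mm k (mm k U V) (ad (mm k U V)) = mm k U (mm k (mm k V (ad V)) (ad U))"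
    by (simp add: ad_mm mm_assoc)
  also have "\<dots> = idm k" using assms by (simp add: uni_def mm_idm_left ad_mats)
  finally have 1: "mm k (mm k U V) (ad (mm k U V)) = idm k" .
  have "mm k (ad (mm k U V)) (mm k U V) = mm k (ad V) (mm k (mm k (ad U) U) V)"
    by (simp add: ad_mm mm_assoc)
  also have "\<dots> = idm k" using assms by (simp add: uni_def mm_idm_left ad_mats)
  finally show ?thesis using 1 by (simp add: uni_def)
qed

lemma uni_idm: "uni k (idm k)"
  by (simp add: uni_def mm_idm_left)

lemma mv_mm: "mv k (mm k A B) x = mv k A (mv k B x)"
proof -
  have "(\<Sum>j<k. (\<Sum>l<k. A i l * B l j) * x j) = (\<Sum>l<k. A i l * (\<Sum>j<k. B l j * x j))" for i
    unfolding sum_distrib_left sum_distrib_right by (subst sum.swap) (simp add: mult.assoc)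
  then show ?thesis by (auto simp: mm_def mv_def fun_eq_iff intro!: sum.cong)
qed

lemma mv_idm: "mv k (idm k) x = (\<lambda>i. if i < k then x i else 0)"
proof -
  have "(\<Sum>l<k. (if i < k \<and> i = l then 1 else 0) * x l) = x i" if "i<k" for i
    using that by (simp add: if_distrib[of "\<lambda>x. x * _"] sum.delta cong: if_cong)
  then show ?thesis by (auto simp: mv_def idm_def fun_eq_iff)
qed

lemma ip_mv: "ip k (mv k A x) y = ip k x (mv k (ad A) y)"
proof -
  have "(\<Sum>i<k. (\<Sum>j<k. A i j * x j) * cnj (y i)) = (\<Sum>j<k. x j * cnj (\<Sum>i<k. cnj (A i j) * y i))"
    unfolding sum_distrib_left sum_distrib_right cnj_sum complex_cnj_mult complex_cnj_cnj by (subst sum.swap) (simp add: mult_ac)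
  then show ?thesis by (simp add: ip_def mv_def ad_def)
qed

lemma ip_self: "ip k x x = complex_of_real (nsq k x)"
  unfolding ip_def nsq_def of_real_sum by (rule sum.cong) (simp_all add: complex_norm_square[symmetric])

lemma nsq_ge0: "0 \<le> nsq k x" by (simp add: nsq_def sum_nonneg)

lemma ip_cong: "(\<And>i. i < k \<Longrightarrow> x i = x' i) \<Longrightarrow> ip k x y = ip k x' y"
  by (simp add: ip_def)
lemma nsq_cong: "(\<And>i. i < k \<Longrightarrow> x i = x' i) \<Longrightarrow> nsq k x = nsq k x'"
  by (simp add: nsq_def)

lemma uni_nsq: assumes "uni k U" shows "nsq k (mv k U x) = nsq k x"
proof -
  have "complex_of_real (nsq k (mv k U x)) = ip k (mv k U x) (mv k U x)" by (simp add: ip_self)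
  also have "\<dots> = ip k x (mv k (mm k (ad U) U) x)" by (simp add: ip_mv mv_mm)
  also have "\<dots> = ip k x x" using assms by (simp add: uni_def mv_idm ip_def)
  finally show ?thesis by (simp add: ip_self)
qed


definition supp :: "nat \<Rightarrow> (nat \<Rightarrow> complex) set" where
  "supp k = {x. \<forall>i. k \<le> i \<longrightarrow> x i = 0}"

lemma coord_cont[continuous_intros]: "continuous_on S (\<lambda>x::nat\<Rightarrow>'a::topological_space. x i)"
  by (rule continuous_on_subset[OF continuous_on_product_coordinates]) simp

lemma compact_sphere_k: "compact {x::nat\<Rightarrow>complex. x \<in> supp k \<and> nsq k x = 1}"
proof -
  define K where "K = (\<lambda>i::nat. if i < k then cball (0::complex) 1 else {0})"
  have cK: "compact (Pi UNIV K)"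
  proof -
    have "compactin (product_topology (\<lambda>i. euclidean) UNIV) (PiE UNIV K)"
      by (subst compactin_PiE) (auto simp: K_def)
    then show ?thesis by (simp add: euclidean_product_topology PiE_UNIV_domain)
  qed
  have cl: "closed {x::nat\<Rightarrow>complex. x \<in> supp k \<and> nsq k x = 1}"
  proof -
    have c0: "closed {x::nat\<Rightarrow>complex. x i = 0}" for i
      by (rule closed_Collect_eq) (rule coord_cont, rule continuous_on_const)
    have "{x::nat\<Rightarrow>complex. \<forall>i. k \<le> i \<longrightarrow> x i = 0} = (\<Inter>i\<in>{k..}. {x. x i = 0})" by auto
    then have 1: "closed {x::nat\<Rightarrow>complex. \<forall>i. k \<le> i \<longrightarrow> x i = 0}"
      using c0 by (simp add: closed_INT)
    have cn: "continuous_on UNIV (\<lambda>x::nat\<Rightarrow>complex. nsq k x)"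
      unfolding nsq_def by (intro continuous_intros)
    have 2: "closed {x::nat\<Rightarrow>complex. nsq k x = 1}"
      by (rule closed_Collect_eq[OF cn continuous_on_const])
    have "{x::nat\<Rightarrow>complex. x \<in> supp k \<and> nsq k x = 1} = {x. \<forall>i. k \<le> i \<longrightarrow> x i = 0} \<inter> {x. nsq k x = 1}"
      by (auto simp: supp_def)
    then show ?thesis using 1 2 by auto
  qed
  have sub: "{x::nat\<Rightarrow>complex. x \<in> supp k \<and> nsq k x = 1} \<subseteq> Pi UNIV K"
  proof
    fix x :: "nat \<Rightarrow> complex" assume x: "x \<in> {x. x \<in> supp k \<and> nsq k x = 1}"
    have "x i \<in> K i" for i
    proof (cases "i < k")
      case True
      have "(cmod (x i))\<^sup>2 \<le> nsq k x" unfolding nsq_def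
        using True by (intro member_le_sum) auto
      then have "(cmod (x i))\<^sup>2 \<le> 1" using x by simp
      then have "cmod (x i) \<le> 1" by (simp add: power_le_one_iff)
      then show ?thesis using True by (simp add: K_def)
    next
      case False then show ?thesis using x by (simp add: K_def supp_def)
    qed
    then show "x \<in> Pi UNIV K" by auto
  qed
  have eq: "{x::nat\<Rightarrow>complex. x \<in> supp k \<and> nsq k x = 1} = Pi UNIV K \<inter> {x. x \<in> supp k \<and> nsq k x = 1}"
    using sub by blast
  show ?thesis by (subst eq) (rule compact_Int_closed[OF cK cl])
qed

definition ej :: "nat \<Rightarrow> nat \<Rightarrow> complex" where "ej j = (\<lambda>i. if i = j then 1 else 0)"

lemma nsq_ej: "j < k \<Longrightarrow> nsq k (ej j) = 1"
  by (simp add: nsq_def ej_def if_distrib[of "\<lambda>x. (cmod x)^2"] sum.delta cong: if_cong)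

lemma ej_supp: "j < k \<Longrightarrow> ej j \<in> supp k"
  by (simp add: supp_def ej_def)

lemma exists_max:
  assumes "1 \<le> k"
  shows "\<exists>w. w \<in> supp k \<and> nsq k w = 1 \<and>
     (\<forall>x. x \<in> supp k \<and> nsq k x = 1 \<longrightarrow> nsq k (mv k Z x) \<le> nsq k (mv k Z w))"
proof -
  let ?S = "{x::nat\<Rightarrow>complex. x \<in> supp k \<and> nsq k x = 1}"
  have ne: "?S \<noteq> {}" using assms nsq_ej[of 0 k] ej_supp[of 0 k] by auto
  have eq: "nsq k (mv k Z x) = (\<Sum>i<k. (cmod (\<Sum>j<k. Z i j * x j))\<^sup>2)" for x
    by (simp add: nsq_def mv_def)
  have cont: "continuous_on ?S (\<lambda>x. nsq k (mv k Z x))"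
    unfolding eq
    by (intro continuous_intros continuous_on_compose2[OF continuous_on_norm_id]) auto
  from continuous_attains_sup[OF compact_sphere_k ne cont] show ?thesis by blast
qed

lemma mv_cong: "(\<And>j. j < k \<Longrightarrow> x j = y j) \<Longrightarrow> mv k M x = mv k M y"
  by (auto simp: mv_def fun_eq_iff intro!: sum.cong)

lemma nsq_scale: "nsq k (\<lambda>i. a * x i) = (cmod a)\<^sup>2 * nsq k x"
  by (simp add: nsq_def sum_distrib_left norm_mult power_mult_distrib)

lemma mv_scale: "mv k M (\<lambda>i. a * x i) = (\<lambda>i. a * mv k M x i)"
  by (auto simp: mv_def fun_eq_iff sum_distrib_left mult_ac)

lemma mv_add: "mv k M (\<lambda>i. x i + y i) = (\<lambda>i. mv k M x i + mv k M y i)"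
  by (auto simp: mv_def fun_eq_iff sum.distrib distrib_left)

lemma nsq_zero: assumes "nsq k x = 0" "j < k" shows "x j = 0"
proof -
  have "(cmod (x j))\<^sup>2 \<le> nsq k x" unfolding nsq_def using assms(2) by (intro member_le_sum) auto
  then show ?thesis using assms by simp
qed

lemma mv_zero: "(\<And>j. j < k \<Longrightarrow> x j = 0) \<Longrightarrow> mv k M x = (\<lambda>i. 0)"
  by (simp add: mv_def fun_eq_iff)

lemma nsq_zerofun[simp]: "nsq k (\<lambda>i. 0) = 0" by (simp add: nsq_def)

lemma max_general:
  assumes w: "\<forall>x. x \<in> supp k \<and> nsq k x = 1 \<longrightarrow> nsq k (mv k Z x) \<le> nsq k (mv k Z w)"
  shows "nsq k (mv k Z x) \<le> nsq k (mv k Z w) * nsq k x"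
proof (cases "nsq k x = 0")
  case True
  then have "mv k Z x = (\<lambda>i. 0)" by (intro mv_zero) (simp add: nsq_zero)
  then show ?thesis using True by simp
next
  case False
  define c where "c = sqrt (nsq k x)"
  have c: "c > 0" using False nsq_ge0[of k x] by (simp add: c_def)
  have c2: "c\<^sup>2 = nsq k x" using nsq_ge0[of k x] by (simp add: c_def)
  define x' where "x' = (\<lambda>i. if i < k then complex_of_real (1/c) * x i else 0)"
  have "nsq k x' = (cmod (complex_of_real (1/c)))\<^sup>2 * nsq k x"
    by (simp add: x'_def nsq_scale[symmetric] cong: nsq_cong)
  also have "\<dots> = 1" using c by (simp add: c2[symmetric] power_divide norm_divide)
  finally have n1: "nsq k x' = 1" .
  have "x' \<in> supp k" by (simp add: x'_def supp_def)
  then have le: "nsq k (mv k Z x') \<le> nsq k (mv k Z w)" using w n1 by blast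
  have mx: "mv k Z x' = mv k Z (\<lambda>i. complex_of_real (1/c) * x i)"
    by (rule mv_cong) (simp add: x'_def)
  have "nsq k (mv k Z x') = (1/c)\<^sup>2 * nsq k (mv k Z x)"
    unfolding mx mv_scale nsq_scale using c by (simp add: norm_divide)
  with le have "nsq k (mv k Z x) / c\<^sup>2 \<le> nsq k (mv k Z w)" by (simp add: power_divide)
  moreover note c2
  ultimately show ?thesis using c nsq_ge0[of k x] by (simp add: divide_le_eq mult.commute split: if_splits)
qed

lemma real_quad: assumes h: "\<And>e::real. e * A + e^2 * B \<le> 0" shows "A = 0"
proof -
  have 1: "\<bar>A\<bar> \<le> e * (- B)" if "e > 0" for e
  proof -
    have a: "e * (A + e * B) \<le> 0" using h[of e] by (simp add: power2_eq_square algebra_simps)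
    have b: "e * (- A + e * B) \<le> 0" using h[of "-e"] by (simp add: power2_eq_square algebra_simps)
    from a that have "A + e * B \<le> 0" by (simp add: mult_le_0_iff)
    moreover from b that have "- A + e * B \<le> 0" by (simp add: mult_le_0_iff)
    ultimately show ?thesis by linarith
  qed
  show ?thesis
  proof (cases "B < 0")
    case False
    then show ?thesis using 1[of 1] by simp
  next
    case True
    show ?thesis
    proof (rule ccontr)
      assume "A \<noteq> 0"
      define e where "e = \<bar>A\<bar> / (- 2 * B)"
      have "e > 0" using True \<open>A \<noteq> 0\<close> by (simp add: e_def divide_pos_neg)
      have "e * (- B) = \<bar>A\<bar> / 2" using True by (simp add: e_def)
      then show False using 1[OF \<open>e > 0\<close>] \<open>A \<noteq> 0\<close> by simp
    qed
  qed
qed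

lemma ip_add_left: "ip k (\<lambda>i. x i + y i) z = ip k x z + ip k y z"
  by (simp add: ip_def sum.distrib distrib_right)
lemma ip_add_right: "ip k z (\<lambda>i. x i + y i) = ip k z x + ip k z y"
  by (simp add: ip_def sum.distrib distrib_left)
lemma ip_swap: "ip k y x = cnj (ip k x y)"
  by (simp add: ip_def cnj_sum mult.commute)
lemma ip_scale_right: "ip k y (\<lambda>i. c * z i) = cnj c * ip k y z"
  by (simp add: ip_def sum_distrib_left mult_ac)
lemma ip_scale_left: "ip k (\<lambda>i. c * z i) y = c * ip k z y"
  by (simp add: ip_def sum_distrib_left mult_ac)

lemma nsq_add: "nsq k (\<lambda>i. y i + z i) = nsq k y + 2 * Re (ip k y z) + nsq k z"
proof -
  have "complex_of_real (nsq k (\<lambda>i. y i + z i)) = ip k y y + ip k y z + cnj (ip k y z) + ip k z z"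
    by (simp add: ip_self[symmetric] ip_add_left ip_add_right ip_swap[of k z y])
  then have "nsq k (\<lambda>i. y i + z i) = Re (ip k y y + ip k y z + cnj (ip k y z) + ip k z z)"
    by (metis Re_complex_of_real)
  then show ?thesis by (simp add: ip_self)
qed

lemma lin_aux: "(s2::real) + 2*R1 + P1 \<le> S \<Longrightarrow> S = s2 + 2*SR + Q' \<Longrightarrow> R1 - SR = X \<Longrightarrow> Y = (P1 - Q')/2 \<Longrightarrow> X + Y \<le> 0"
  by argo

lemma foc_step:
  assumes mx: "\<And>x. nsq k (mv k Z x) \<le> s2 * nsq k x" and s2: "nsq k (mv k Z w) = s2" and w1: "nsq k w = 1"
    and d: "cmod d = 1"
  shows "Re (cnj d * (ip k (mv k Z w) (mv k Z v) - complex_of_real s2 * ip k w v)) = 0"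
proof (rule real_quad)
  fix e :: real
  define c where "c = complex_of_real e * d"
  define R1 where "R1 = Re (cnj c * ip k (mv k Z w) (mv k Z v))"
  define R2 where "R2 = Re (cnj c * ip k w v)"
  define N1 where "N1 = nsq k (mv k Z v)"
  define N2 where "N2 = nsq k v"
  have c2: "(cmod c)^2 = e^2" using d by (simp add: c_def norm_mult power_mult_distrib)
  have "nsq k (mv k Z (\<lambda>i. w i + c * v i)) \<le> s2 * nsq k (\<lambda>i. w i + c * v i)" by (rule mx)
  then have "s2 + 2 * R1 + e^2 * N1 \<le> s2 * (1 + 2 * R2 + e^2 * N2)"
    unfolding R1_def R2_def N1_def N2_def
    by (simp only: mv_add mv_scale nsq_add ip_scale_right nsq_scale c2 s2 w1)
  moreover have "s2 * (1 + 2 * R2 + e^2 * N2) = s2 + 2 * (s2 * R2) + e^2 * (s2 * N2)"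
    by (simp add: algebra_simps)
  moreover have "R1 - s2 * R2 = e * Re (cnj d * (ip k (mv k Z w) (mv k Z v) - complex_of_real s2 * ip k w v))"
    unfolding R1_def R2_def by (simp add: c_def algebra_simps)
  moreover have "e^2 * ((N1 - s2 * N2) / 2) = (e^2 * N1 - e^2 * (s2 * N2)) / 2"
    by (simp add: algebra_simps)
  ultimately have "e * Re (cnj d * (ip k (mv k Z w) (mv k Z v) - complex_of_real s2 * ip k w v))
      + e^2 * ((N1 - s2 * N2) / 2) \<le> 0"
    by (rule lin_aux)
  then show "e * Re (cnj d * (ip k (mv k Z w) (mv k Z v) - complex_of_real s2 * ip k w v))
      + e^2 * ((nsq k (mv k Z v) - s2 * nsq k v) / 2) \<le> 0"
    unfolding N1_def N2_def .
qed

lemma foc_ip: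
  assumes mx: "\<And>x. nsq k (mv k Z x) \<le> s2 * nsq k x" and s2: "nsq k (mv k Z w) = s2" and w1: "nsq k w = 1"
  shows "ip k (mv k Z w) (mv k Z v) = complex_of_real s2 * ip k w v"
proof -
  let ?z = "ip k (mv k Z w) (mv k Z v) - complex_of_real s2 * ip k w v"
  have "Re (cnj 1 * ?z) = 0" by (rule foc_step[OF mx s2 w1]) simp
  moreover have "Re (cnj \<i> * ?z) = 0" by (rule foc_step[OF mx s2 w1]) simp
  ultimately have "?z = 0" by (simp add: complex_eq_iff)
  then show ?thesis by simp
qed


definition hh :: "nat \<Rightarrow> (nat \<Rightarrow> complex) \<Rightarrow> nat \<Rightarrow> nat \<Rightarrow> complex" where
  "hh k v = (\<lambda>i j. if i < k \<and> j < k then (if i = j then 1 else 0) - 2 * v i * cnj (v j) / complex_of_real (nsq k v) else 0)"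

lemma hh_mats: "hh k v \<in> mats k k" by (simp add: hh_def mats_def)

lemma hh_ad: "ad (hh k v) = hh k v"
  by (auto simp: hh_def ad_def fun_eq_iff)

lemma sum_delta_l: assumes "(i::nat) < k" shows " (\<Sum>l<k. (if i = l then 1 else 0) * f l) = (f i :: complex)"
proof -
  have "(\<Sum>l<k. (if i = l then 1 else 0) * f l) = (\<Sum>l<k. if i = l then f l else 0)"
    by (rule sum.cong) auto
  also have "\<dots> = f i" using assms by (subst sum.delta') auto
  finally show ?thesis .
qed
lemma sum_delta_r: assumes "(j::nat) < k" shows " (\<Sum>l<k. f l * (if l = j then 1 else 0)) = (f j :: complex)"
proof -
  have "(\<Sum>l<k. f l * (if l = j then 1 else 0)) = (\<Sum>l<k. if l = j then f l else 0)"
    by (rule sum.cong) auto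
  also have "\<dots> = f j" using assms by (subst sum.delta) auto
  finally show ?thesis .
qed

lemma hh_sq: "mm k (hh k v) (hh k v) = idm k"
proof (cases "nsq k v = 0")
  case True
  then have "hh k v = idm k" by (auto simp: hh_def idm_def fun_eq_iff)
  then show ?thesis by (simp add: mm_idm_left)
next
  case False
  define n where "n = complex_of_real (nsq k v)"
  have nn: "n \<noteq> 0" using False by (simp add: n_def)
  have sv: "(\<Sum>l<k. cnj (v l) * v l) = n"
    using ip_self[of k v] by (simp add: n_def ip_def mult.commute)
  have sv': "(\<Sum>l<k. v l * cnj (v l)) = n"
    using ip_self[of k v] by (simp add: n_def ip_def)
  show ?thesis
  proof (rule ext, rule ext)
    fix i j
    show "mm k (hh k v) (hh k v) i j = idm k i j"
    proof (cases "i < k \<and> j < k")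
      case False then show ?thesis by (auto simp: mm_def idm_def)
    next
      case True
      have "(\<Sum>l<k. ((if i = l then 1 else 0) - 2 * v i * cnj (v l) / n) * ((if l = j then 1 else 0) - 2 * v l * cnj (v j) / n))
         = (\<Sum>l<k. (if i = l then 1 else 0) * (if l = j then 1 else 0))
           - (\<Sum>l<k. (if i = l then 1 else 0) * (2 * v l * cnj (v j) / n))
           - (\<Sum>l<k. (2 * v i * cnj (v l) / n) * (if l = j then 1 else 0))
           + (\<Sum>l<k. (2 * v i * cnj (v l) / n) * (2 * v l * cnj (v j) / n))"
        by (simp add: algebra_simps sum.distrib sum_subtractf)
      also have "\<dots> = (if i = j then 1 else 0) - 2 * v i * cnj (v j) / n - 2 * v i * cnj (v j) / n
           + 4 * v i * cnj (v j) / (n * n) * (\<Sum>l<k. cnj (v l) * v l)"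
      proof -
        have 1: "(\<Sum>l<k. (if i = l then 1 else 0) * (if l = j then 1 else (0::complex))) = (if i = j then 1 else 0)"
          using True by (simp add: sum_delta_l)
        have 2: "(\<Sum>l<k. (if i = l then 1 else 0) * (2 * v l * cnj (v j) / n)) = 2 * v i * cnj (v j) / n"
          by (rule sum_delta_l) (use True in simp)
        have 3: "(\<Sum>l<k. (2 * v i * cnj (v l) / n) * (if l = j then 1 else 0)) = 2 * v i * cnj (v j) / n"
          by (rule sum_delta_r) (use True in simp)
        have 4: "(\<Sum>l<k. (2 * v i * cnj (v l) / n) * (2 * v l * cnj (v j) / n)) = 4 * v i * cnj (v j) / (n * n) * (\<Sum>l<k. cnj (v l) * v l)"
          unfolding sum_distrib_left by (rule sum.cong) (simp_all add: divide_inverse mult_ac)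
        show ?thesis unfolding 1 2 3 4 ..
      qed
      also have "\<dots> = (if i = j then 1 else 0)"
        using nn by (simp add: sv sv' field_simps)
      finally show ?thesis using True by (simp add: mm_def hh_def idm_def n_def)
    qed
  qed
qed

lemma hh_uni: "uni k (hh k v)"
  by (simp add: uni_def hh_mats hh_ad hh_sq)


definition dgm :: "nat \<Rightarrow> (nat \<Rightarrow> complex) \<Rightarrow> nat \<Rightarrow> nat \<Rightarrow> complex" where
  "dgm k d = (\<lambda>i j. if i < k \<and> i = j then d i else 0)"

lemma dgm_uni: assumes "\<And>i. i < k \<Longrightarrow> cmod (d i) = 1" shows "uni k (dgm k d)"
proof -
  have 1: "mm k (dgm k d) (ad (dgm k d)) = idm k"
  proof (intro ext)
    fix i j
    show "mm k (dgm k d) (ad (dgm k d)) i j = idm k i j"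
    proof (cases "i < k \<and> j < k")
      case True
      have "(\<Sum>l<k. dgm k d i l * ad (dgm k d) l j) = (\<Sum>l<k. (if i = l then 1 else 0) * (if l = j then d i * cnj (d j) else 0))"
        using True by (intro sum.cong) (auto simp: dgm_def ad_def)
      also have "\<dots> = (if i = j then d i * cnj (d j) else 0)" by (rule sum_delta_l) (use True in simp)
      also have "\<dots> = idm k i j" using True assms[of i]
        by (auto simp: idm_def complex_mult_cnj cmod_power2[symmetric])
      finally show ?thesis using True by (simp add: mm_def)
    qed (auto simp: mm_def idm_def)
  qed
  have 2: "mm k (ad (dgm k d)) (dgm k d) = idm k"
  proof (intro ext)
    fix i j
    show "mm k (ad (dgm k d)) (dgm k d) i j = idm k i j"
    proof (cases "i < k \<and> j < k")
      case True
      have "(\<Sum>l<k. ad (dgm k d) i l * dgm k d l j) = (\<Sum>l<k. (if i = l then 1 else 0) * (if l = j then cnj (d i) * d j else 0))"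
        using True by (intro sum.cong) (auto simp: dgm_def ad_def)
      also have "\<dots> = (if i = j then cnj (d i) * d j else 0)" by (rule sum_delta_l) (use True in simp)
      also have "\<dots> = idm k i j" using True assms[of i]
        by (auto simp: idm_def complex_mult_cnj cmod_power2[symmetric] mult.commute)
      finally show ?thesis using True by (simp add: mm_def)
    qed (auto simp: mm_def idm_def)
  qed
  have "dgm k d \<in> mats k k" by (simp add: dgm_def mats_def)
  then show ?thesis using 1 2 by (simp add: uni_def)
qed

lemma col_unitary:
  assumes k: "0 < k" and us: "u \<in> supp k" and u1: "nsq k u = 1"
  shows "\<exists>U. uni k U \<and> (\<forall>i. U i 0 = u i)"
proof -
  define \<phi> where "\<phi> = (if u 0 = 0 then 1 else u 0 / complex_of_real (cmod (u 0)))"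
  have ph1: "cmod \<phi> = 1" by (simp add: \<phi>_def norm_divide)
  have key1: "\<phi> * cnj (u 0) = complex_of_real (cmod (u 0))"
  proof (cases "u 0 = 0")
    case False
    have e: "u 0 * cnj (u 0) = complex_of_real (cmod (u 0)) * complex_of_real (cmod (u 0))"
      by (simp add: complex_norm_square[symmetric] power2_eq_square)
    have "\<phi> * cnj (u 0) = (u 0 * cnj (u 0)) / complex_of_real (cmod (u 0))"
      using False by (simp add: \<phi>_def)
    also have "\<dots> = complex_of_real (cmod (u 0))" unfolding e using False by simp
    finally show ?thesis .
  qed (simp add: \<phi>_def)
  have key2: "cnj \<phi> * u 0 = complex_of_real (cmod (u 0))"
    using arg_cong[OF key1, of cnj] by (simp add: mult.commute)
  have phc: "\<phi> * cnj \<phi> = 1" using ph1 by (simp add: complex_mult_cnj cmod_power2[symmetric])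
  define v where "v = (\<lambda>i. u i + (- \<phi>) * ej 0 i)"
  have ipu: "ip k u (ej 0) = u 0"
  proof -
    have "ip k u (ej 0) = (\<Sum>i<k. u i * (if i = 0 then 1 else 0))" by (simp add: ip_def ej_def if_distrib[of cnj] cong: if_cong)
    also have "\<dots> = u 0" by (rule sum_delta_r) (use k in simp)
    finally show ?thesis .
  qed
  have "nsq k v = nsq k u + 2 * Re (ip k u (\<lambda>i. (- \<phi>) * ej 0 i)) + nsq k (\<lambda>i. (- \<phi>) * ej 0 i)"
    unfolding v_def by (rule nsq_add)
  also have "\<dots> = 1 + 2 * Re (- (cnj \<phi> * u 0)) + 1"
    unfolding ip_scale_right nsq_scale using u1 ph1 nsq_ej[OF k] by (simp add: ipu)
  finally have nv: "nsq k v = 2 - 2 * cmod (u 0)" by (simp add: key2)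
  define d where "d = (\<lambda>i::nat. if i = 0 then \<phi> else 1)"
  define U where "U = mm k (hh k v) (dgm k d)"
  have uU: "uni k U" unfolding U_def
    by (intro uni_mm hh_uni dgm_uni) (simp add: d_def ph1)
  have "U i 0 = u i" for i
  proof (cases "i < k")
    case False
    then show ?thesis using us by (simp add: U_def mm_def supp_def)
  next
    case True
    have "U i 0 = (\<Sum>l<k. (hh k v i l * \<phi>) * (if l = 0 then 1 else 0))"
      using True k unfolding U_def mm_def by (auto intro!: sum.cong simp: dgm_def d_def)
    also have "\<dots> = hh k v i 0 * \<phi>" by (rule sum_delta_r) (use k in simp)
    also have "\<dots> = ((if i = 0 then 1 else 0) - 2 * v i * cnj (v 0) / complex_of_real (nsq k v)) * \<phi>"
      using True k by (simp add: hh_def)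
    also have "\<dots> = u i"
    proof (cases "nsq k v = 0")
      case True
      then have "v i = 0" using \<open>i < k\<close> by (rule nsq_zero)
      then show ?thesis using \<open>nsq k v = 0\<close> by (auto simp: v_def ej_def)
    next
      case False
      have cv0: "\<phi> * cnj (v 0) = complex_of_real (cmod (u 0)) - 1"
        by (simp add: v_def ej_def key1 phc algebra_simps)
      have nz: "complex_of_real (2 - 2 * cmod (u 0)) \<noteq> 0" using False nv by simp
      have "((if i = 0 then 1 else 0) - 2 * v i * cnj (v 0) / complex_of_real (nsq k v)) * \<phi>
          = (if i = 0 then \<phi> else 0) - 2 * v i * (\<phi> * cnj (v 0)) / complex_of_real (2 - 2 * cmod (u 0))"
        by (simp add: nv algebra_simps)
      also have "\<dots> = (if i = 0 then \<phi> else 0) + v i"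
        using nz unfolding cv0 by (simp add: field_simps)
      also have "\<dots> = u i" by (simp add: v_def ej_def)
      finally show ?thesis .
    qed
    finally show ?thesis .
  qed
  then show ?thesis using uU by blast
qed


definition blk :: "complex \<Rightarrow> (nat\<Rightarrow>nat\<Rightarrow>complex) \<Rightarrow> nat\<Rightarrow>nat\<Rightarrow>complex" where
  "blk a M = (\<lambda>i j. if i = 0 \<and> j = 0 then a else if 0 < i \<and> 0 < j then M (i - 1) (j - 1) else 0)"

lemma blk_mats: "M \<in> mats k k \<Longrightarrow> blk a M \<in> mats (Suc k) (Suc k)"
  by (auto simp: mats_def blk_def)

lemma blk_ad: "ad (blk a M) = blk (cnj a) (ad M)"
  by (auto simp: ad_def blk_def fun_eq_iff)

lemma blk_idm: "blk 1 (idm k) = idm (Suc k)"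
  by (auto simp: blk_def idm_def fun_eq_iff)

lemma blk_mm: assumes "A \<in> mats k k" "B \<in> mats k k"
  shows "mm (Suc k) (blk a A) (blk b B) = blk (a * b) (mm k A B)"
proof (intro ext)
  fix i j
  show "mm (Suc k) (blk a A) (blk b B) i j = blk (a * b) (mm k A B) i j"
  proof (cases "i < Suc k \<and> j < Suc k")
    case False
    then show ?thesis by (auto simp: mm_def blk_def)
  next
    case True
    have "mm (Suc k) (blk a A) (blk b B) i j = blk a A i 0 * blk b B 0 j + (\<Sum>l<k. blk a A i (Suc l) * blk b B (Suc l) j)"
      using True unfolding mm_def by (simp only: if_True simp_thms sum.lessThan_Suc_shift)
    also have "\<dots> = blk (a * b) (mm k A B) i j"
      using True by (cases i; cases j) (auto simp: blk_def mm_def)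
    finally show ?thesis .
  qed
qed

lemma uni_blk: assumes "uni k M" shows "uni (Suc k) (blk 1 M)"
  using assms by (simp add: uni_def blk_mats blk_ad blk_mm ad_mats blk_idm)

lemma blk_dgm: "blk (complex_of_real a) (dgm k (\<lambda>i. complex_of_real (s i)))
   = dgm (Suc k) (\<lambda>i. complex_of_real (if i = 0 then a else s (i - 1)))"
  by (auto simp: blk_def dgm_def fun_eq_iff)

lemma mm_col: "j < k \<Longrightarrow> mm k A B i j = mv k A (\<lambda>l. B l j) i"
  by (simp add: mm_def mv_def)

lemma mv_ej: "j < k \<Longrightarrow> i < k \<Longrightarrow> mv k Z (ej j) i = Z i j"
proof -
  assume a: "j < k" "i < k"
  have "mv k Z (ej j) i = (\<Sum>l<k. Z i l * (if l = j then 1 else 0))" using a by (simp add: mv_def ej_def)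
  also have "\<dots> = Z i j" by (rule sum_delta_r) (use a in simp)
  finally show ?thesis .
qed

lemma ip_ej: "j < k \<Longrightarrow> ip k w (ej j) = w j"
proof -
  assume a: "j < k"
  have "ip k w (ej j) = (\<Sum>l<k. w l * (if l = j then 1 else 0))" by (simp add: ip_def ej_def if_distrib[of cnj] cong: if_cong)
  also have "\<dots> = w j" by (rule sum_delta_r) (use a in simp)
  finally show ?thesis .
qed


lemma svd:
  "Z \<in> mats k k \<Longrightarrow> \<exists>U W s. uni k U \<and> uni k W \<and> (\<forall>i. 0 \<le> s i) \<and>
      mm k (mm k (ad U) Z) W = dgm k (\<lambda>i. complex_of_real (s i))"
proof (induction k arbitrary: Z)
  case 0
  have "mm 0 (mm 0 (ad (idm 0)) Z) (idm 0) = dgm 0 (\<lambda>i. complex_of_real 0)"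
    by (simp add: mm_def dgm_def fun_eq_iff)
  then show ?case using uni_idm[of 0]
    by (intro exI[of _ "idm 0"] exI[of _ "\<lambda>i::nat. 0::real"]) auto
next
  case (Suc k)
  let ?K = "Suc k"
  have Zm: "Z \<in> mats ?K ?K" by fact
  obtain w where ws: "w \<in> supp ?K" and w1: "nsq ?K w = 1"
    and wmax: "\<forall>x. x \<in> supp ?K \<and> nsq ?K x = 1 \<longrightarrow> nsq ?K (mv ?K Z x) \<le> nsq ?K (mv ?K Z w)"
    using exists_max[of ?K Z] by auto
  define s2 where "s2 = nsq ?K (mv ?K Z w)"
  have mx: "\<And>x. nsq ?K (mv ?K Z x) \<le> s2 * nsq ?K x"
    unfolding s2_def by (rule max_general[OF wmax])
  show ?case
  proof (cases "s2 = 0")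
    case True
    have Z0: "Z = (\<lambda>i j. 0)"
    proof (intro ext)
      fix i j
      show "Z i j = 0"
      proof (cases "i < ?K \<and> j < ?K")
        case True
        have "nsq ?K (mv ?K Z (ej j)) \<le> 0" using mx[of "ej j"] \<open>s2 = 0\<close> by simp
        then have "nsq ?K (mv ?K Z (ej j)) = 0" using nsq_ge0[of ?K "mv ?K Z (ej j)"] by linarith
        then have "mv ?K Z (ej j) i = 0" using True by (intro nsq_zero) auto
        then show ?thesis using True by (simp add: mv_ej)
      next
        case False then show ?thesis using Zm by (auto simp: mats_def)
      qed
    qed
    have "mm ?K (mm ?K (ad (idm ?K)) Z) (idm ?K) = dgm ?K (\<lambda>i. complex_of_real 0)"
      by (simp add: Z0 mm_def dgm_def fun_eq_iff)
    then show ?thesis using uni_idm[of ?K]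
      by (intro exI[of _ "idm ?K"] exI[of _ "\<lambda>i::nat. 0::real"]) auto
  next
    case False
    have s2p: "s2 > 0" using False nsq_ge0[of ?K "mv ?K Z w"] by (simp add: s2_def)
    define \<sigma> where "\<sigma> = sqrt s2"
    have sp: "\<sigma> > 0" using s2p by (simp add: \<sigma>_def)
    have ss: "\<sigma> * \<sigma> = s2" using s2p by (simp add: \<sigma>_def)
    define u where "u = (\<lambda>i. complex_of_real (1 / \<sigma>) * mv ?K Z w i)"
    have us: "u \<in> supp ?K" by (simp add: u_def supp_def mv_def)
    have u1: "nsq ?K u = 1"
      unfolding u_def nsq_scale using sp by (simp add: s2_def[symmetric] power2_eq_square norm_divide ss[symmetric])
    have foc: "mv ?K (ad Z) u = (\<lambda>j. complex_of_real \<sigma> * w j)"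
    proof (intro ext)
      fix j
      show "mv ?K (ad Z) u j = complex_of_real \<sigma> * w j"
      proof (cases "j < ?K")
        case False then show ?thesis using ws by (simp add: mv_def supp_def)
      next
        case True
        have "ip ?K (mv ?K Z w) (mv ?K Z (ej j)) = complex_of_real s2 * ip ?K w (ej j)"
          by (rule foc_ip[OF mx s2_def[symmetric] w1])
        moreover have "ip ?K (mv ?K Z w) (mv ?K Z (ej j)) = (\<Sum>i<?K. cnj (Z i j) * mv ?K Z w i)"
          unfolding ip_def using True by (intro sum.cong) (auto simp: mv_ej mult.commute)
        ultimately have e: "(\<Sum>i<?K. cnj (Z i j) * mv ?K Z w i) = complex_of_real s2 * w j"
          using True by (simp add: ip_ej)
        have "mv ?K (ad Z) u j = (\<Sum>i<?K. cnj (Z i j) * (complex_of_real (1 / \<sigma>) * mv ?K Z w i))"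
          using True unfolding mv_def[of ?K "ad Z" u] by (simp add: ad_def u_def)
        also have "\<dots> = complex_of_real (1 / \<sigma>) * (\<Sum>i<?K. cnj (Z i j) * mv ?K Z w i)"
          unfolding sum_distrib_left by (rule sum.cong) (simp_all add: mult_ac)
        also have "\<dots> = complex_of_real \<sigma> * w j"
          unfolding e using sp by (simp add: ss[symmetric] field_simps)
        finally show ?thesis .
      qed
    qed
    have Zw: "mv ?K Z w = (\<lambda>i. complex_of_real \<sigma> * u i)"
      using sp by (simp add: u_def fun_eq_iff)
    obtain U1 where U1: "uni ?K U1" and U1c: "\<And>i. U1 i 0 = u i"
      using col_unitary[of ?K u] us u1 by auto
    obtain W1 where W1: "uni ?K W1" and W1c: "\<And>i. W1 i 0 = w i"
      using col_unitary[of ?K w] ws w1 by auto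
    define B where "B = mm ?K (mm ?K (ad U1) Z) W1"
    have Bm: "B \<in> mats ?K ?K" by (simp add: B_def)
    have e0: "mv ?K (ad U1) u = (\<lambda>i. if i = 0 then 1 else 0)"
    proof -
      have "mv ?K (ad U1) u = mv ?K (ad U1) (\<lambda>l. U1 l 0)" using U1c by simp
      also have "\<dots> = (\<lambda>i. mm ?K (ad U1) U1 i 0)" by (simp add: mm_col fun_eq_iff)
      also have "\<dots> = (\<lambda>i. if i = 0 then 1 else 0)" using U1 by (simp add: uni_def idm_def fun_eq_iff)
      finally show ?thesis .
    qed
    have f0: "mv ?K (ad W1) w = (\<lambda>i. if i = 0 then 1 else 0)"
    proof -
      have "mv ?K (ad W1) w = mv ?K (ad W1) (\<lambda>l. W1 l 0)" using W1c by simp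
      also have "\<dots> = (\<lambda>i. mm ?K (ad W1) W1 i 0)" by (simp add: mm_col fun_eq_iff)
      also have "\<dots> = (\<lambda>i. if i = 0 then 1 else 0)" using W1 by (simp add: uni_def idm_def fun_eq_iff)
      finally show ?thesis .
    qed
    have col0: "B i 0 = (if i = 0 then complex_of_real \<sigma> else 0)" for i
    proof -
      have "B i 0 = mv ?K (mm ?K (ad U1) Z) (\<lambda>l. W1 l 0) i" unfolding B_def by (simp add: mm_col)
      also have "\<dots> = mv ?K (ad U1) (mv ?K Z w) i" using W1c by (simp add: mv_mm)
      also have "\<dots> = complex_of_real \<sigma> * mv ?K (ad U1) u i" unfolding Zw mv_scale by simp
      also have "\<dots> = (if i = 0 then complex_of_real \<sigma> else 0)" by (simp add: e0)
      finally show ?thesis .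
    qed
    have adB: "ad B = mm ?K (mm ?K (ad W1) (ad Z)) U1"
      by (simp add: B_def ad_mm mm_assoc)
    have row0: "B 0 j = (if j = 0 then complex_of_real \<sigma> else 0)" for j
    proof -
      have "ad B j 0 = mv ?K (mm ?K (ad W1) (ad Z)) (\<lambda>l. U1 l 0) j" unfolding adB by (simp add: mm_col)
      also have "\<dots> = mv ?K (ad W1) (mv ?K (ad Z) u) j" using U1c by (simp add: mv_mm)
      also have "\<dots> = complex_of_real \<sigma> * mv ?K (ad W1) w j" unfolding foc mv_scale by simp
      also have "\<dots> = (if j = 0 then complex_of_real \<sigma> else 0)" by (simp add: f0)
      finally have "cnj (B 0 j) = (if j = 0 then complex_of_real \<sigma> else 0)" by (simp add: ad_def)
      then show ?thesis by (metis complex_cnj_cnj complex_cnj_complex_of_real complex_cnj_zero)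
    qed
    define Z' where "Z' = (\<lambda>i j. if i < k \<and> j < k then B (Suc i) (Suc j) else 0)"
    have Z'm: "Z' \<in> mats k k" by (simp add: Z'_def mats_def)
    have Bblk: "B = blk (complex_of_real \<sigma>) Z'"
    proof (intro ext)
      fix i j
      show "B i j = blk (complex_of_real \<sigma>) Z' i j"
      proof (cases "i = 0 \<or> j = 0")
        case True then show ?thesis using col0 row0 by (auto simp: blk_def)
      next
        case False
        then obtain i' j' where "i = Suc i'" "j = Suc j'" by (metis not0_implies_Suc)
        then show ?thesis using Bm by (auto simp: blk_def Z'_def mats_def)
      qed
    qed
    obtain U' W' s' where U': "uni k U'" and W': "uni k W'" and s': "\<forall>i. 0 \<le> s' i"
      and d': "mm k (mm k (ad U') Z') W' = dgm k (\<lambda>i. complex_of_real (s' i))"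
      using Suc.IH[OF Z'm] by blast
    define U where "U = mm ?K U1 (blk 1 U')"
    define W where "W = mm ?K W1 (blk 1 W')"
    have uU: "uni ?K U" unfolding U_def by (intro uni_mm U1 uni_blk U')
    have uW: "uni ?K W" unfolding W_def by (intro uni_mm W1 uni_blk W')
    have "mm ?K (mm ?K (ad U) Z) W = mm ?K (mm ?K (ad (blk 1 U')) B) (blk 1 W')"
      unfolding U_def W_def B_def ad_mm by (simp only: mm_assoc)
    also have "\<dots> = blk (complex_of_real \<sigma>) (mm k (mm k (ad U') Z') W')"
      unfolding Bblk blk_ad using uni_mats[OF U'] uni_mats[OF W'] Z'm
      by (simp add: blk_mm ad_mats)
    also have "\<dots> = dgm ?K (\<lambda>i. complex_of_real (if i = 0 then \<sigma> else s' (i - 1)))"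
      unfolding d' blk_dgm ..
    finally show ?thesis using uU uW s' sp
      by (intro exI[of _ U] exI[of _ W] exI[of _ "\<lambda>i. if i = 0 then \<sigma> else s' (i - 1)"]) auto
  qed
qed


lemma mv_dgm: "i < k \<Longrightarrow> mv k (dgm k d) y i = d i * y i"
proof -
  assume a: "i < k"
  have "mv k (dgm k d) y i = (\<Sum>l<k. (if i = l then 1 else 0) * (d i * y l))"
    using a by (auto simp: mv_def dgm_def intro!: sum.cong)
  also have "\<dots> = d i * y i" by (rule sum_delta_l) (use a in simp)
  finally show ?thesis .
qed

lemma nsq_dgm_le: assumes "\<And>i. i < k \<Longrightarrow> cmod (d i) \<le> m"
  shows "nsq k (mv k (dgm k d) y) \<le> m\<^sup>2 * nsq k y"
proof -
  have "nsq k (mv k (dgm k d) y) = (\<Sum>i<k. (cmod (d i))\<^sup>2 * (cmod (y i))\<^sup>2)"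
    by (simp add: nsq_def mv_dgm norm_mult power_mult_distrib)
  also have "\<dots> \<le> (\<Sum>i<k. m\<^sup>2 * (cmod (y i))\<^sup>2)"
    by (intro sum_mono mult_right_mono power_mono) (auto simp: assms)
  also have "\<dots> = m\<^sup>2 * nsq k y" by (simp add: nsq_def sum_distrib_left)
  finally show ?thesis .
qed

lemma cvnorm_nsq: "cvnorm k x = sqrt (nsq k x)"
  by (simp add: cvnorm_def nsq_def)

lemma cvnorm_mat_vec: "cvnorm k (mat_vec k M x) = sqrt (nsq k (mv k M x))"
  by (simp add: cvnorm_def nsq_def mat_vec_def mv_def)

lemma mult_adj_mm: "Z \<in> mats k k \<Longrightarrow> mult_adj k Z = mm k Z (ad Z)"
  by (auto simp: mult_adj_def mm_def ad_def mats_def fun_eq_iff)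

lemma dgm_mm: "mm k (dgm k a) (dgm k b) = dgm k (\<lambda>i. a i * b i)"
proof (intro ext)
  fix i j
  show "mm k (dgm k a) (dgm k b) i j = dgm k (\<lambda>i. a i * b i) i j"
  proof (cases "i < k \<and> j < k")
    case True
    have "mm k (dgm k a) (dgm k b) i j = (\<Sum>l<k. (if i = l then 1 else 0) * (a i * (if l = j then b l else 0)))"
      using True by (auto simp: mm_def dgm_def intro!: sum.cong)
    also have "\<dots> = a i * (if i = j then b i else 0)" by (rule sum_delta_l) (use True in simp)
    finally show ?thesis using True by (auto simp: dgm_def)
  qed (auto simp: mm_def dgm_def)
qed

lemma dgm_ad: "ad (dgm k a) = dgm k (\<lambda>i. cnj (a i))"
  by (auto simp: ad_def dgm_def fun_eq_iff)

lemma dgm_mats: "dgm k a \<in> mats k k" by (simp add: dgm_def mats_def)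

lemma opnorm_svd:
  assumes Zm: "Z \<in> mats k k" and k: "1 \<le> k" and U: "uni k U" and W: "uni k W" and s: "\<forall>i. 0 \<le> s i"
    and d: "mm k (mm k (ad U) Z) W = dgm k (\<lambda>i. complex_of_real (s i))"
  shows "opnorm k (mult_adj k Z) = (Max (s ` {..<k}))\<^sup>2"
proof -
  let ?D = "dgm k (\<lambda>i. complex_of_real (s i))"
  let ?D2 = "dgm k (\<lambda>i. complex_of_real ((s i)\<^sup>2))"
  define sm where "sm = Max (s ` {..<k})"
  have fin: "finite (s ` {..<k})" "s ` {..<k} \<noteq> {}" using k by (auto simp: lessThan_empty_iff)
  have smax: "\<And>i. i < k \<Longrightarrow> s i \<le> sm" unfolding sm_def using fin by auto
  obtain im where im: "im < k" "s im = sm" unfolding sm_def using Max_in[OF fin] by auto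
  have sm0: "0 \<le> sm" using s im by metis
  have Zeq: "Z = mm k U (mm k ?D (ad W))"
  proof -
    have "mm k U (mm k ?D (ad W)) = mm k (mm k U (ad U)) (mm k Z (mm k W (ad W)))"
      unfolding d[symmetric] by (simp only: mm_assoc)
    also have "\<dots> = Z" using U W Zm by (simp add: uni_def mm_idm_left mm_idm_right)
    finally show ?thesis by simp
  qed
  have Meq: "mult_adj k Z = mm k U (mm k ?D2 (ad U))"
  proof -
    have "mult_adj k Z = mm k Z (ad Z)" by (rule mult_adj_mm[OF Zm])
    also have "\<dots> = mm k U (mm k ?D (mm k (mm k (ad W) W) (mm k (ad ?D) (ad U))))"
      unfolding Zeq ad_mm ad_ad by (simp only: mm_assoc)
    also have "\<dots> = mm k U (mm k ?D (mm k ?D (ad U)))"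
      using W by (simp add: uni_def mm_idm_left ad_mats dgm_mats dgm_ad)
    also have "\<dots> = mm k U (mm k ?D2 (ad U))"
    proof -
      have "mm k ?D (mm k ?D (ad U)) = mm k (mm k ?D ?D) (ad U)" by (simp only: mm_assoc)
      then show ?thesis by (simp add: dgm_mm power2_eq_square)
    qed
    finally show ?thesis .
  qed
  have Mx: "nsq k (mv k (mult_adj k Z) x) = nsq k (mv k ?D2 (mv k (ad U) x))" for x
    unfolding Meq mv_mm uni_nsq[OF U] ..
  have le: "cvnorm k (mat_vec k (mult_adj k Z) x) \<le> sm\<^sup>2" if "cvnorm k x \<le> 1" for x
  proof -
    have "nsq k (mv k (mult_adj k Z) x) \<le> (sm\<^sup>2)\<^sup>2 * nsq k (mv k (ad U) x)"
    proof -
      have "cmod (complex_of_real ((s i)\<^sup>2)) \<le> sm\<^sup>2" if "i < k" for i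
      proof -
        have "cmod (complex_of_real ((s i)\<^sup>2)) = (s i)\<^sup>2" using s by (simp only: norm_of_real) simp
        also have "\<dots> \<le> sm\<^sup>2" using s smax[OF that] by (intro power_mono) auto
        finally show ?thesis .
      qed
      then show ?thesis unfolding Mx by (rule nsq_dgm_le)
    qed
    also have "\<dots> = (sm\<^sup>2)\<^sup>2 * nsq k x" using uni_nsq[OF uni_ad[OF U]] by simp
    also have "\<dots> \<le> (sm\<^sup>2)\<^sup>2 * 1"
    proof -
      have "sqrt (nsq k x) \<le> 1" using that by (simp add: cvnorm_nsq)
      then have "nsq k x \<le> 1" by simp
      then show ?thesis by (intro mult_left_mono) auto
    qed
    finally have "nsq k (mv k (mult_adj k Z) x) \<le> (sm\<^sup>2)\<^sup>2" by simp
    then have "sqrt (nsq k (mv k (mult_adj k Z) x)) \<le> sqrt ((sm\<^sup>2)\<^sup>2)" by (rule real_sqrt_le_mono)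
    moreover have "sqrt ((sm\<^sup>2)\<^sup>2) = sm\<^sup>2" by (simp only: real_sqrt_abs) simp
    ultimately show ?thesis by (simp only: cvnorm_mat_vec)
  qed
  define x0 where "x0 = mv k U (ej im)"
  have x0n: "cvnorm k x0 = 1" unfolding x0_def cvnorm_nsq uni_nsq[OF U] using nsq_ej[OF im(1)] by simp
  have "mv k (ad U) x0 = mv k (idm k) (ej im)" unfolding x0_def mv_mm[symmetric] using U by (simp add: uni_def)
  also have "\<dots> = ej im" using im by (auto simp: mv_idm ej_def fun_eq_iff)
  finally have ux: "mv k (ad U) x0 = ej im" .
  have "mv k ?D2 (ej im) = (\<lambda>i. complex_of_real ((s im)\<^sup>2) * ej im i)"
  proof (intro ext)
    fix i
    show "mv k ?D2 (ej im) i = complex_of_real ((s im)\<^sup>2) * ej im i"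
    proof (cases "i < k")
      case True then show ?thesis by (auto simp: mv_dgm ej_def)
    next
      case False then show ?thesis using im by (auto simp: mv_def ej_def)
    qed
  qed
  then have "nsq k (mv k (mult_adj k Z) x0) = (sm\<^sup>2)\<^sup>2"
    unfolding Mx ux using im nsq_ej[OF im(1)] by (simp add: nsq_scale norm_power)
  moreover have "sqrt ((sm\<^sup>2)\<^sup>2) = sm\<^sup>2" by (simp only: real_sqrt_abs) simp
  ultimately have att: "cvnorm k (mat_vec k (mult_adj k Z) x0) = sm\<^sup>2" by (simp only: cvnorm_mat_vec)
  have "opnorm k (mult_adj k Z) = sm\<^sup>2"
    unfolding opnorm_def
  proof (rule cSup_eq_maximum)
    show "sm\<^sup>2 \<in> {cvnorm k (mat_vec k (mult_adj k Z) x) |x. cvnorm k x \<le> 1}"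
      using att x0n by (intro CollectI exI[of _ x0]) simp
    show "\<And>y. y \<in> {cvnorm k (mat_vec k (mult_adj k Z) x) |x. cvnorm k x \<le> 1} \<Longrightarrow> y \<le> sm\<^sup>2"
      using le by blast
  qed
  then show ?thesis by (simp add: sm_def)
qed


lemma sum_add_split: "(\<Sum>c<(a::nat)+b. f c) = (\<Sum>c<a. f c) + (\<Sum>c<b. f (a + c))"
  by (induct b) (simp_all add: add_ac)

lemma sum_mult_split: "(\<Sum>c<(k::nat)*n. f c) = (\<Sum>j<k. \<Sum>p<n. f (j*n + p))"
proof (induct k)
  case (Suc k)
  have "(\<Sum>c<Suc k * n. f c) = (\<Sum>c<k*n + n. f c)" by (simp add: add.commute)
  also have "\<dots> = (\<Sum>c<k*n. f c) + (\<Sum>p<n. f (k*n + p))" by (rule sum_add_split)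
  finally show ?case using Suc by simp
qed simp

lemma divmod_a: "p < (n::nat) \<Longrightarrow> (j*n + p) div n = j \<and> (j*n + p) mod n = p"
  by simp

lemma lt_a: "j < k \<Longrightarrow> p < (n::nat) \<Longrightarrow> j*n + p < k*n"
proof -
  assume "j < k" "p < n"
  then have "j*n + p < (j+1)*n" by simp
  also have "\<dots> \<le> k*n" using \<open>j < k\<close> by (intro mult_right_mono) auto
  finally show ?thesis .
qed

lemma sum_rowA:
  fixes F :: "nat \<Rightarrow> 'a::comm_monoid_add"
  assumes p: "p < n"
    and z1: "\<And>j p1. j < k \<Longrightarrow> p1 < n \<Longrightarrow> p1 \<noteq> p \<Longrightarrow> F (j*n + p1) = 0"
    and z2: "\<And>j q1. j < k \<Longrightarrow> q1 < m \<Longrightarrow> F (k*n + (j*m + q1)) = 0"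
  shows "(\<Sum>c<k*n + k*m. F c) = (\<Sum>j<k. F (j*n + p))"
proof -
  have "(\<Sum>c<k*n + k*m. F c) = (\<Sum>j<k. \<Sum>p1<n. F (j*n + p1)) + (\<Sum>j<k. \<Sum>q1<m. F (k*n + (j*m + q1)))"
    by (simp add: sum_add_split sum_mult_split)
  also have "(\<Sum>j<k. \<Sum>q1<m. F (k*n + (j*m + q1))) = 0" using z2 by simp
  also have "(\<Sum>j<k. \<Sum>p1<n. F (j*n + p1)) = (\<Sum>j<k. F (j*n + p))"
  proof (rule sum.cong)
    fix j assume "j \<in> {..<k}"
    then have "(\<Sum>p1<n. F (j*n + p1)) = (\<Sum>p1<n. if p1 = p then F (j*n + p) else 0)"
      using z1 by (intro sum.cong) auto
    also have "\<dots> = F (j*n + p)" using p by (simp add: sum.delta)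
    finally show "(\<Sum>p1<n. F (j*n + p1)) = F (j*n + p)" .
  qed simp
  finally show ?thesis by simp
qed

lemma sum_rowC:
  fixes F :: "nat \<Rightarrow> 'a::comm_monoid_add"
  assumes q: "q < m"
    and z1: "\<And>j p1. j < k \<Longrightarrow> p1 < n \<Longrightarrow> F (j*n + p1) = 0"
    and z2: "\<And>j q1. j < k \<Longrightarrow> q1 < m \<Longrightarrow> q1 \<noteq> q \<Longrightarrow> F (k*n + (j*m + q1)) = 0"
  shows "(\<Sum>c<k*n + k*m. F c) = (\<Sum>j<k. F (k*n + (j*m + q)))"
proof -
  have "(\<Sum>c<k*n + k*m. F c) = (\<Sum>j<k. \<Sum>p1<n. F (j*n + p1)) + (\<Sum>j<k. \<Sum>q1<m. F (k*n + (j*m + q1)))"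
    by (simp add: sum_add_split sum_mult_split)
  also have "(\<Sum>j<k. \<Sum>p1<n. F (j*n + p1)) = 0" using z1 by simp
  also have "(\<Sum>j<k. \<Sum>q1<m. F (k*n + (j*m + q1))) = (\<Sum>j<k. F (k*n + (j*m + q)))"
  proof (rule sum.cong)
    fix j assume "j \<in> {..<k}"
    then have "(\<Sum>q1<m. F (k*n + (j*m + q1))) = (\<Sum>q1<m. if q1 = q then F (k*n + (j*m + q)) else 0)"
      using z2 by (intro sum.cong) auto
    also have "\<dots> = F (k*n + (j*m + q))" using q by (simp add: sum.delta)
    finally show "(\<Sum>q1<m. F (k*n + (j*m + q1))) = F (k*n + (j*m + q))" .
  qed simp
  finally show ?thesis by simp
qed

lemma idx_cases:
  assumes "c < k*n + k*(m::nat)"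
  obtains j p1 where "j < k" "p1 < n" "c = j*n + p1"
        | j q1 where "j < k" "q1 < m" "c = k*n + (j*m + q1)"
proof (cases "c < k*n")
  case True
  have "c div n < k" using True by (rule less_mult_imp_div_less)
  moreover have "c mod n < n" using True by (cases "n = 0") auto
  moreover have "c = (c div n)*n + c mod n" by simp
  ultimately show ?thesis using that(1) by blast
next
  case False
  define c' where "c' = c - k*n"
  have c': "c' < k*m" "c = k*n + c'" using False assms by (auto simp: c'_def)
  have "c' div m < k" using c' by (intro less_mult_imp_div_less) simp
  moreover have "c' mod m < m" using c' by (cases "m = 0") auto
  moreover have "c = k*n + ((c' div m)*m + c' mod m)" using c' by simp
  ultimately show ?thesis using that(2) by blast
qed

lemma idx_cases2:
  assumes "r < k*(n + (m::nat))"
  obtains i p where "i < k" "p < n" "r = i*(n+m) + p"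
        | i q where "i < k" "q < m" "r = i*(n+m) + (n + q)"
proof -
  have "r div (n+m) < k" using assms by (intro less_mult_imp_div_less) simp
  moreover have "r mod (n+m) < n+m" using assms by (cases "n + m = 0") auto
  moreover have "r = (r div (n+m))*(n+m) + r mod (n+m)" by (rule div_mult_mod_eq[symmetric])
  ultimately show ?thesis using that
    by (metis add_diff_inverse_nat nat_add_left_cancel_less)
qed


definition Vbig :: "nat \<Rightarrow> nat \<Rightarrow> nat \<Rightarrow> (nat\<Rightarrow>nat\<Rightarrow>complex) \<Rightarrow> (nat\<Rightarrow>nat\<Rightarrow>complex) \<Rightarrow> nat \<Rightarrow> nat \<Rightarrow> complex" where
  "Vbig k n m U W r c = (if r < k*(n+m) \<and> c < k*n + k*m then
     (if r mod (n+m) < n then (if c < k*n \<and> c mod n = r mod (n+m) then cnj (U (c div n) (r div (n+m))) else 0)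
      else (if k*n \<le> c \<and> (c - k*n) mod m = r mod (n+m) - n then cnj (W ((c - k*n) div m) (r div (n+m))) else 0))
    else 0)"

lemma enc_lt: "i < k \<Longrightarrow> p < (N::nat) \<Longrightarrow> i*N + p < k*N"
  by (rule lt_a)

lemma enc_div: "p < (N::nat) \<Longrightarrow> (i*N + p) div N = i" by simp
lemma enc_mod: "p < (N::nat) \<Longrightarrow> (i*N + p) mod N = p" by simp

lemma enc_inj: "p < (N::nat) \<Longrightarrow> p' < N \<Longrightarrow> (i*N + p = i'*N + p') \<longleftrightarrow> (i = i' \<and> p = p')"
  by (metis enc_div enc_mod)

lemma VAA: assumes "i < k" "p < n" "j < k" "p1 < n"
  shows "Vbig k n m U W (i*(n+m)+p) (j*n+p1) = (if p1 = p then cnj (U j i) else 0)"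
proof -
  have "i*(n+m)+p < k*(n+m)" using assms by (intro enc_lt) auto
  moreover have "j*n+p1 < k*n" using assms by (intro enc_lt) auto
  ultimately show ?thesis using assms unfolding Vbig_def
    by (simp add: enc_div enc_mod del: div_mult_self3 mod_mult_self3)
qed

lemma VAC: assumes "i < k" "p < n" "j < k" "q1 < m"
  shows "Vbig k n m U W (i*(n+m)+p) (k*n+(j*m+q1)) = 0"
proof -
  have "i*(n+m)+p < k*(n+m)" using assms by (intro enc_lt) auto
  then show ?thesis using assms unfolding Vbig_def
    by (simp add: enc_div enc_mod del: div_mult_self3 mod_mult_self3)
qed

lemma VCA: assumes "i < k" "q < m" "j < k" "p1 < n"
  shows "Vbig k n m U W (i*(n+m)+(n+q)) (j*n+p1) = 0"
proof -
  have "i*(n+m)+(n+q) < k*(n+m)" using assms by (intro enc_lt) auto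
  moreover have "j*n+p1 < k*n" using assms by (intro enc_lt) auto
  ultimately show ?thesis using assms unfolding Vbig_def
    by (simp add: enc_div enc_mod del: div_mult_self3 mod_mult_self3)
qed

lemma VCC: assumes "i < k" "q < m" "j < k" "q1 < m"
  shows "Vbig k n m U W (i*(n+m)+(n+q)) (k*n+(j*m+q1)) = (if q1 = q then cnj (W j i) else 0)"
proof -
  have "i*(n+m)+(n+q) < k*(n+m)" using assms by (intro enc_lt) auto
  moreover have "j*m+q1 < k*m" using assms by (intro enc_lt) auto
  ultimately show ?thesis using assms unfolding Vbig_def
    by (simp add: enc_div enc_mod del: div_mult_self3 mod_mult_self3)
qed


lemma sum_rows: "(\<Sum>r<(k::nat)*(n+m). G r) = (\<Sum>i<k. (\<Sum>p<n. G (i*(n+m)+p)) + (\<Sum>q<m. G (i*(n+m)+(n+q))))"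
proof -
  have "(\<Sum>r<k*(n+m). G r) = (\<Sum>i<k. \<Sum>p<n+m. G (i*(n+m)+p))" by (rule sum_mult_split)
  then show ?thesis by (simp add: sum_add_split add.assoc)
qed

lemma Vbig_mats: "Vbig k n m U W \<in> mats (k*n+k*m) (k*n+k*m)"
  by (auto simp: mats_def Vbig_def distrib_left)

lemma uniD1: "uni k U \<Longrightarrow> i < k \<Longrightarrow> i' < k \<Longrightarrow> (\<Sum>j<k. cnj (U j i) * U j i') = (if i = i' then 1 else 0)"
proof -
  assume u: "uni k U" "i < k" "i' < k"
  have "mm k (ad U) U i i' = idm k i i'" using u by (simp add: uni_def)
  then show ?thesis using u by (simp add: mm_def ad_def idm_def)
qed

lemma uniD2: "uni k U \<Longrightarrow> j < k \<Longrightarrow> j' < k \<Longrightarrow> (\<Sum>i<k. U j i * cnj (U j' i)) = (if j = j' then 1 else 0)"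
proof -
  assume u: "uni k U" "j < k" "j' < k"
  have "mm k U (ad U) j j' = idm k j j'" using u by (simp add: uni_def)
  then show ?thesis using u by (simp add: mm_def ad_def idm_def)
qed

lemma Vbig_rows:
  assumes U: "uni k U" and W: "uni k W"
  shows "mm (k*n+k*m) (Vbig k n m U W) (ad (Vbig k n m U W)) = idm (k*n+k*m)"
proof (intro ext)
  fix r r'
  let ?V = "Vbig k n m U W"
  let ?N = "k*n+k*m"
  have NN: "k*(n+m) = ?N" by (simp add: distrib_left)
  show "mm ?N ?V (ad ?V) r r' = idm ?N r r'"
  proof (cases "r < ?N \<and> r' < ?N")
    case False then show ?thesis by (auto simp: mm_def idm_def)
  next
    case True
    then have rr: "r < k*(n+m)" "r' < k*(n+m)" using NN by auto
    have e: "mm ?N ?V (ad ?V) r r' = (\<Sum>c<?N. ?V r c * cnj (?V r' c))"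
      using True by (simp add: mm_def ad_def)
    show ?thesis
    proof (rule idx_cases2[OF rr(1)])
      fix i p assume ip: "i < k" "p < n" "r = i*(n+m)+p"
      have "(\<Sum>c<?N. ?V r c * cnj (?V r' c)) = (\<Sum>j<k. ?V r (j*n+p) * cnj (?V r' (j*n+p)))"
        by (rule sum_rowA[OF ip(2)]) (simp_all add: ip VAA VAC)
      also have "\<dots> = (\<Sum>j<k. cnj (U j i) * cnj (?V r' (j*n+p)))"
        by (rule sum.cong) (simp_all add: ip VAA)
      also have "\<dots> = idm ?N r r'"
      proof (rule idx_cases2[OF rr(2)])
        fix i' p' assume ip': "i' < k" "p' < n" "r' = i'*(n+m)+p'"
        have "(\<Sum>j<k. cnj (U j i) * cnj (?V r' (j*n+p))) = (\<Sum>j<k. cnj (U j i) * (if p = p' then U j i' else 0))"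
          by (rule sum.cong) (simp_all add: ip ip' VAA)
        also have "\<dots> = (if p = p' then (\<Sum>j<k. cnj (U j i) * U j i') else 0)" by simp
        also have "\<dots> = (if p = p' \<and> i = i' then 1 else 0)" using uniD1[OF U ip(1) ip'(1)] by (cases "i = i'") auto
        also have "\<dots> = idm ?N r r'" using True ip ip' by (auto simp: idm_def enc_inj)
        finally show ?thesis .
      next
        fix i' q' assume iq': "i' < k" "q' < m" "r' = i'*(n+m)+(n+q')"
        have "(\<Sum>j<k. cnj (U j i) * cnj (?V r' (j*n+p))) = 0"
          by (simp add: ip iq' VCA)
        also have "\<dots> = idm ?N r r'" using True ip iq' by (auto simp: idm_def enc_inj)
        finally show ?thesis .
      qed
      finally show ?thesis using e by simp
    next
      fix i q assume iq: "i < k" "q < m" "r = i*(n+m)+(n+q)"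
      have "(\<Sum>c<?N. ?V r c * cnj (?V r' c)) = (\<Sum>j<k. ?V r (k*n+(j*m+q)) * cnj (?V r' (k*n+(j*m+q))))"
        by (rule sum_rowC[OF iq(2)]) (simp_all add: iq VCA VCC)
      also have "\<dots> = (\<Sum>j<k. cnj (W j i) * cnj (?V r' (k*n+(j*m+q))))"
        by (rule sum.cong) (simp_all add: iq VCC)
      also have "\<dots> = idm ?N r r'"
      proof (rule idx_cases2[OF rr(2)])
        fix i' p' assume ip': "i' < k" "p' < n" "r' = i'*(n+m)+p'"
        have "(\<Sum>j<k. cnj (W j i) * cnj (?V r' (k*n+(j*m+q)))) = 0"
          by (simp add: iq ip' VAC)
        also have "\<dots> = idm ?N r r'" using True iq ip' by (auto simp: idm_def enc_inj)
        finally show ?thesis .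
      next
        fix i' q' assume iq': "i' < k" "q' < m" "r' = i'*(n+m)+(n+q')"
        have "(\<Sum>j<k. cnj (W j i) * cnj (?V r' (k*n+(j*m+q)))) = (\<Sum>j<k. cnj (W j i) * (if q = q' then W j i' else 0))"
          by (rule sum.cong) (simp_all add: iq iq' VCC)
        also have "\<dots> = (if q = q' then (\<Sum>j<k. cnj (W j i) * W j i') else 0)" by simp
        also have "\<dots> = (if q = q' \<and> i = i' then 1 else 0)" using uniD1[OF W iq(1) iq'(1)] by (cases "i = i'") auto
        also have "\<dots> = idm ?N r r'" using True iq iq' by (auto simp: idm_def enc_inj)
        finally show ?thesis .
      qed
      finally show ?thesis using e by simp
    qed
  qed
qed


lemma sum_delta_gen:
  fixes f :: "nat \<Rightarrow> 'a::comm_monoid_add"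
  assumes "p1 < n" "\<And>p. p < n \<Longrightarrow> p \<noteq> p1 \<Longrightarrow> f p = 0"
  shows "(\<Sum>p<n. f p) = f p1"
proof -
  have "(\<Sum>p<n. f p) = (\<Sum>p<n. if p = p1 then f p1 else 0)" using assms by (intro sum.cong) auto
  also have "\<dots> = f p1" using assms by (simp add: sum.delta)
  finally show ?thesis .
qed

lemma Vbig_cols:
  assumes U: "uni k U" and W: "uni k W"
  shows "mm (k*n+k*m) (ad (Vbig k n m U W)) (Vbig k n m U W) = idm (k*n+k*m)"
proof (intro ext)
  fix c c'
  let ?V = "Vbig k n m U W"
  let ?N = "k*n+k*m"
  have NN: "k*(n+m) = ?N" by (simp add: distrib_left)
  show "mm ?N (ad ?V) ?V c c' = idm ?N c c'"
  proof (cases "c < ?N \<and> c' < ?N")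
    case False then show ?thesis by (auto simp: mm_def idm_def)
  next
    case True
    have e: "mm ?N (ad ?V) ?V c c' = (\<Sum>r<k*(n+m). cnj (?V r c) * ?V r c')"
      using True by (simp add: mm_def ad_def NN)
    also have "\<dots> = (\<Sum>i<k. (\<Sum>p<n. cnj (?V (i*(n+m)+p) c) * ?V (i*(n+m)+p) c')
          + (\<Sum>q<m. cnj (?V (i*(n+m)+(n+q)) c) * ?V (i*(n+m)+(n+q)) c'))"
      by (rule sum_rows)
    also have "\<dots> = idm ?N c c'"
    proof (rule idx_cases[of c k n m])
      show "c < k*n + k*m" using True by simp
    next
      fix j p1 assume jp: "j < k" "p1 < n" "c = j*n + p1"
      have "(\<Sum>i<k. (\<Sum>p<n. cnj (?V (i*(n+m)+p) c) * ?V (i*(n+m)+p) c')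
          + (\<Sum>q<m. cnj (?V (i*(n+m)+(n+q)) c) * ?V (i*(n+m)+(n+q)) c'))
          = (\<Sum>i<k. U j i * ?V (i*(n+m)+p1) c')"
      proof (rule sum.cong)
        fix i assume i: "i \<in> {..<k}"
        have "(\<Sum>p<n. cnj (?V (i*(n+m)+p) c) * ?V (i*(n+m)+p) c') = cnj (?V (i*(n+m)+p1) c) * ?V (i*(n+m)+p1) c'"
          by (rule sum_delta_gen[OF jp(2)]) (use i jp in \<open>simp add: VAA\<close>)
        moreover have "(\<Sum>q<m. cnj (?V (i*(n+m)+(n+q)) c) * ?V (i*(n+m)+(n+q)) c') = 0"
          using i jp by (simp add: VCA)
        ultimately show "(\<Sum>p<n. cnj (?V (i*(n+m)+p) c) * ?V (i*(n+m)+p) c')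
          + (\<Sum>q<m. cnj (?V (i*(n+m)+(n+q)) c) * ?V (i*(n+m)+(n+q)) c') = U j i * ?V (i*(n+m)+p1) c'"
          using i jp by (simp add: VAA)
      qed simp
      also have "\<dots> = idm ?N c c'"
      proof (rule idx_cases[of c' k n m])
        show "c' < k*n + k*m" using True by simp
      next
        fix j' p1' assume jp': "j' < k" "p1' < n" "c' = j'*n + p1'"
        have "(\<Sum>i<k. U j i * ?V (i*(n+m)+p1) c') = (\<Sum>i<k. U j i * (if p1' = p1 then cnj (U j' i) else 0))"
          by (rule sum.cong) (simp_all add: jp jp' VAA)
        also have "\<dots> = (if p1' = p1 then (\<Sum>i<k. U j i * cnj (U j' i)) else 0)" by simp
        also have "\<dots> = (if p1 = p1' \<and> j = j' then 1 else 0)" using uniD2[OF U jp(1) jp'(1)] by (cases "j = j'") auto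
        also have "\<dots> = idm ?N c c'" using True jp jp' by (auto simp: idm_def enc_inj)
        finally show ?thesis .
      next
        fix j' q1' assume jq': "j' < k" "q1' < m" "c' = k*n + (j'*m + q1')"
        have "(\<Sum>i<k. U j i * ?V (i*(n+m)+p1) c') = 0" by (simp add: jp jq' VAC)
        moreover have "c \<noteq> c'" using jp jq' lt_a[of j k p1 n] by auto
        ultimately show ?thesis using True by (simp add: idm_def)
      qed
      finally show ?thesis .
    next
      fix j q1 assume jq: "j < k" "q1 < m" "c = k*n + (j*m + q1)"
      have "(\<Sum>i<k. (\<Sum>p<n. cnj (?V (i*(n+m)+p) c) * ?V (i*(n+m)+p) c')
          + (\<Sum>q<m. cnj (?V (i*(n+m)+(n+q)) c) * ?V (i*(n+m)+(n+q)) c'))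
          = (\<Sum>i<k. W j i * ?V (i*(n+m)+(n+q1)) c')"
      proof (rule sum.cong)
        fix i assume i: "i \<in> {..<k}"
        have "(\<Sum>q<m. cnj (?V (i*(n+m)+(n+q)) c) * ?V (i*(n+m)+(n+q)) c') = cnj (?V (i*(n+m)+(n+q1)) c) * ?V (i*(n+m)+(n+q1)) c'"
          by (rule sum_delta_gen[OF jq(2)]) (use i jq in \<open>simp add: VCC\<close>)
        moreover have "(\<Sum>p<n. cnj (?V (i*(n+m)+p) c) * ?V (i*(n+m)+p) c') = 0"
          using i jq by (simp add: VAC)
        ultimately show "(\<Sum>p<n. cnj (?V (i*(n+m)+p) c) * ?V (i*(n+m)+p) c')
          + (\<Sum>q<m. cnj (?V (i*(n+m)+(n+q)) c) * ?V (i*(n+m)+(n+q)) c') = W j i * ?V (i*(n+m)+(n+q1)) c'"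
          using i jq by (simp add: VCC)
      qed simp
      also have "\<dots> = idm ?N c c'"
      proof (rule idx_cases[of c' k n m])
        show "c' < k*n + k*m" using True by simp
      next
        fix j' p1' assume jp': "j' < k" "p1' < n" "c' = j'*n + p1'"
        have "(\<Sum>i<k. W j i * ?V (i*(n+m)+(n+q1)) c') = 0" by (simp add: jq jp' VCA)
        moreover have "c \<noteq> c'" using jq jp' lt_a[of j' k p1' n] by auto
        ultimately show ?thesis using True by (simp add: idm_def)
      next
        fix j' q1' assume jq': "j' < k" "q1' < m" "c' = k*n + (j'*m + q1')"
        have "(\<Sum>i<k. W j i * ?V (i*(n+m)+(n+q1)) c') = (\<Sum>i<k. W j i * (if q1' = q1 then cnj (W j' i) else 0))"
          by (rule sum.cong) (simp_all add: jq jq' VCC)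
        also have "\<dots> = (if q1' = q1 then (\<Sum>i<k. W j i * cnj (W j' i)) else 0)" by simp
        also have "\<dots> = (if q1 = q1' \<and> j = j' then 1 else 0)" using uniD2[OF W jq(1) jq'(1)] by (cases "j = j'") auto
        also have "\<dots> = idm ?N c c'" using True jq jq' by (auto simp: idm_def enc_inj)
        finally show ?thesis .
      qed
      finally show ?thesis .
    qed
    finally show ?thesis .
  qed
qed

lemma Vbig_uni: "uni k U \<Longrightarrow> uni k W \<Longrightarrow> uni (k*n+k*m) (Vbig k n m U W)"
  by (simp add: uni_def Vbig_mats Vbig_rows Vbig_cols)


definition bdiag :: "nat \<Rightarrow> nat \<Rightarrow> (nat \<Rightarrow> nat \<Rightarrow> nat \<Rightarrow> 'a::zero) \<Rightarrow> nat \<Rightarrow> nat \<Rightarrow> 'a" where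
  "bdiag N0 k B = (\<lambda>r r'. if r < k*N0 \<and> r' < k*N0 \<and> r div N0 = r' div N0 then B (r div N0) (r mod N0) (r' mod N0) else 0)"

lemma bdiag_enc: "i < k \<Longrightarrow> i' < k \<Longrightarrow> p < N0 \<Longrightarrow> p' < N0 \<Longrightarrow>
   bdiag N0 k B (i*N0+p) (i'*N0+p') = (if i = i' then B i p p' else 0)"
  using enc_lt[of i k p N0] enc_lt[of i' k p' N0]
  by (simp add: bdiag_def enc_div enc_mod del: div_mult_self3 mod_mult_self3)

lemma XAA: "j < k \<Longrightarrow> j' < k \<Longrightarrow> p < n \<Longrightarrow> p' < n \<Longrightarrow>
  upper (k*n) (k*m) (kron_id k n a) B C (j*n+p) (j'*n+p') = (if j = j' then a p p' else 0)"
  using enc_lt[of j k p n] enc_lt[of j' k p' n]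
  by (simp add: upper_def kron_id_def enc_div enc_mod del: div_mult_self3 mod_mult_self3)

lemma XAC: "j < k \<Longrightarrow> j' < k \<Longrightarrow> p < n \<Longrightarrow> q' < m \<Longrightarrow>
  upper (k*n) (k*m) A (kron sc k n m Z b) C (j*n+p) (k*n+(j'*m+q')) = sc (Z j j') (b p q')"
  using enc_lt[of j k p n] enc_lt[of j' k q' m]
  by (simp add: upper_def kron_def enc_div enc_mod del: div_mult_self3 mod_mult_self3)

lemma XCA: "j < k \<Longrightarrow> j' < k \<Longrightarrow> q < m \<Longrightarrow> p' < n \<Longrightarrow>
  upper (k*n) (k*m) A B C (k*n+(j*m+q)) (j'*n+p') = 0"
  using enc_lt[of j' k p' n]
  by (simp add: upper_def)

lemma XCC: "j < k \<Longrightarrow> j' < k \<Longrightarrow> q < m \<Longrightarrow> q' < m \<Longrightarrow>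
  upper (k*n) (k*m) A B (kron_id k m c) (k*n+(j*m+q)) (k*n+(j'*m+q')) = (if j = j' then c q q' else 0)"
  using enc_lt[of j k q m] enc_lt[of j' k q' m]
  by (simp add: upper_def kron_id_def enc_div enc_mod del: div_mult_self3 mod_mult_self3)

lemma sum_swap4: "(\<Sum>p\<in>P. \<Sum>q\<in>Q. \<Sum>p'\<in>P'. \<Sum>q'\<in>Q'. f p q p' q') = (\<Sum>p'\<in>P'. \<Sum>q'\<in>Q'. \<Sum>p\<in>P. \<Sum>q\<in>Q. f p q p' q')"
proof -
  have "(\<Sum>p\<in>P. \<Sum>q\<in>Q. \<Sum>p'\<in>P'. \<Sum>q'\<in>Q'. f p q p' q') = (\<Sum>p\<in>P. \<Sum>p'\<in>P'. \<Sum>q\<in>Q. \<Sum>q'\<in>Q'. f p q p' q')"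
    by (rule sum.cong[OF refl], rule sum.swap)
  also have "\<dots> = (\<Sum>p'\<in>P'. \<Sum>p\<in>P. \<Sum>q\<in>Q. \<Sum>q'\<in>Q'. f p q p' q')" by (rule sum.swap)
  also have "\<dots> = (\<Sum>p'\<in>P'. \<Sum>p\<in>P. \<Sum>q'\<in>Q'. \<Sum>q\<in>Q. f p q p' q')"
    by (rule sum.cong[OF refl], rule sum.cong[OF refl], rule sum.swap)
  also have "\<dots> = (\<Sum>p'\<in>P'. \<Sum>q'\<in>Q'. \<Sum>p\<in>P. \<Sum>q\<in>Q. f p q p' q')"
    by (rule sum.cong[OF refl], rule sum.swap)
  finally show ?thesis .
qed


lemma conj_inv:
  fixes sc :: "complex \<Rightarrow> 'v::ab_group_add \<Rightarrow> 'v"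
  assumes vs: "vector_space sc" and V: "uni N V" and A: "A \<in> mats N N"
  shows "conj_by sc N (ad V) (conj_by sc N V A) = A"
proof -
  interpret vector_space sc by (rule vs)
  have VV: "(\<Sum>p<N. cnj (V p i) * V p p') = (if i = p' then 1 else 0)" if "i < N" "p' < N" for i p'
  proof -
    have "mm N (ad V) V i p' = idm N i p'" using V by (simp add: uni_def)
    then show ?thesis using that by (simp add: mm_def ad_def idm_def)
  qed
  show ?thesis
  proof (intro ext)
    fix i j
    show "conj_by sc N (ad V) (conj_by sc N V A) i j = A i j"
    proof (cases "i < N \<and> j < N")
      case False then show ?thesis using A by (auto simp: conj_by_def mats_def)
    next
      case True
      have "conj_by sc N (ad V) (conj_by sc N V A) i j
          = (\<Sum>p<N. \<Sum>q<N. sc (cnj (V p i) * V q j) (\<Sum>p'<N. \<Sum>q'<N. sc (V p p' * cnj (V q q')) (A p' q')))"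
        using True by (simp add: conj_by_def ad_def)
      also have "\<dots> = (\<Sum>p<N. \<Sum>q<N. \<Sum>p'<N. \<Sum>q'<N. sc ((cnj (V p i) * V p p') * (V q j * cnj (V q q'))) (A p' q'))"
        by (simp add: scale_sum_right mult_ac)
      also have "\<dots> = (\<Sum>p'<N. \<Sum>q'<N. \<Sum>p<N. \<Sum>q<N. sc ((cnj (V p i) * V p p') * (V q j * cnj (V q q'))) (A p' q'))"
        by (rule sum_swap4)
      also have "\<dots> = (\<Sum>p'<N. \<Sum>q'<N. sc ((\<Sum>p<N. cnj (V p i) * V p p') * (\<Sum>q<N. V q j * cnj (V q q'))) (A p' q'))"
        by (simp add: scale_sum_left sum_product)
      also have "\<dots> = (\<Sum>p'<N. \<Sum>q'<N. sc ((if i = p' then 1 else 0) * (if j = q' then 1 else 0)) (A p' q'))"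
      proof (intro sum.cong refl)
        fix p' q' assume pq: "p' \<in> {..<N}" "q' \<in> {..<N}"
        have "(\<Sum>q<N. V q j * cnj (V q q')) = cnj (\<Sum>q<N. cnj (V q j) * V q q')" by (simp add: mult.commute)
        also have "\<dots> = (if j = q' then 1 else 0)" using VV[of j q'] True pq by simp
        finally show "sc ((\<Sum>p<N. cnj (V p i) * V p p') * (\<Sum>q<N. V q j * cnj (V q q'))) (A p' q')
            = sc ((if i = p' then 1 else 0) * (if j = q' then 1 else 0)) (A p' q')"
          using VV[of i p'] True pq by simp
      qed
      also have "\<dots> = (\<Sum>q'<N. sc ((if i = i then 1 else 0) * (if j = q' then 1 else 0)) (A i q'))"
        by (rule sum_delta_gen[of i N "\<lambda>p'. \<Sum>q'<N. sc ((if i = p' then 1 else 0) * (if j = q' then 1 else 0)) (A p' q')"])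
          (use True in auto)
      also have "\<dots> = sc ((if i = i then 1 else 0) * (if j = j then 1 else 0)) (A i j)"
        by (rule sum_delta_gen[of j N "\<lambda>q'. sc ((if i = i then 1 else 0) * (if j = q' then 1 else 0)) (A i q')"])
          (use True in auto)
      also have "\<dots> = A i j" by simp
      finally show ?thesis .
    qed
  qed
qed


context
  fixes sc :: "complex \<Rightarrow> 'v::ab_group_add \<Rightarrow> 'v"
  assumes vs: "vector_space sc"
begin

lemma rowA_red: assumes "i < k" "p < n"
  shows "(\<Sum>c<k*n+k*m. sc (Vbig k n m U W (i*(n+m)+p) c * \<gamma> c) (Y c))
       = (\<Sum>j<k. sc (cnj (U j i) * \<gamma> (j*n+p)) (Y (j*n+p)))"
proof -
  interpret vector_space sc by (rule vs)
  have "(\<Sum>c<k*n+k*m. sc (Vbig k n m U W (i*(n+m)+p) c * \<gamma> c) (Y c))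
      = (\<Sum>j<k. sc (Vbig k n m U W (i*(n+m)+p) (j*n+p) * \<gamma> (j*n+p)) (Y (j*n+p)))"
    by (rule sum_rowA[OF assms(2)]) (simp_all add: assms VAA VAC)
  also have "\<dots> = (\<Sum>j<k. sc (cnj (U j i) * \<gamma> (j*n+p)) (Y (j*n+p)))"
    by (rule sum.cong) (simp_all add: assms VAA)
  finally show ?thesis .
qed

lemma rowC_red: assumes "i < k" "q < m"
  shows "(\<Sum>c<k*n+k*m. sc (Vbig k n m U W (i*(n+m)+(n+q)) c * \<gamma> c) (Y c))
       = (\<Sum>j<k. sc (cnj (W j i) * \<gamma> (k*n+(j*m+q))) (Y (k*n+(j*m+q))))"
proof -
  interpret vector_space sc by (rule vs)
  have "(\<Sum>c<k*n+k*m. sc (Vbig k n m U W (i*(n+m)+(n+q)) c * \<gamma> c) (Y c))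
      = (\<Sum>j<k. sc (Vbig k n m U W (i*(n+m)+(n+q)) (k*n+(j*m+q)) * \<gamma> (k*n+(j*m+q))) (Y (k*n+(j*m+q))))"
    by (rule sum_rowC[OF assms(2)]) (simp_all add: assms VCA VCC)
  also have "\<dots> = (\<Sum>j<k. sc (cnj (W j i) * \<gamma> (k*n+(j*m+q))) (Y (k*n+(j*m+q))))"
    by (rule sum.cong) (simp_all add: assms VCC)
  finally show ?thesis .
qed

lemma rowA_red': assumes "i < k" "p < n"
  shows "(\<Sum>c<k*n+k*m. sc (\<gamma> c * cnj (Vbig k n m U W (i*(n+m)+p) c)) (Y c))
       = (\<Sum>j<k. sc (\<gamma> (j*n+p) * U j i) (Y (j*n+p)))"
proof -
  interpret vector_space sc by (rule vs)
  have "(\<Sum>c<k*n+k*m. sc (\<gamma> c * cnj (Vbig k n m U W (i*(n+m)+p) c)) (Y c))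
      = (\<Sum>j<k. sc (\<gamma> (j*n+p) * cnj (Vbig k n m U W (i*(n+m)+p) (j*n+p))) (Y (j*n+p)))"
    by (rule sum_rowA[OF assms(2)]) (simp_all add: assms VAA VAC)
  also have "\<dots> = (\<Sum>j<k. sc (\<gamma> (j*n+p) * U j i) (Y (j*n+p)))"
    by (rule sum.cong) (simp_all add: assms VAA)
  finally show ?thesis .
qed

lemma rowC_red': assumes "i < k" "q < m"
  shows "(\<Sum>c<k*n+k*m. sc (\<gamma> c * cnj (Vbig k n m U W (i*(n+m)+(n+q)) c)) (Y c))
       = (\<Sum>j<k. sc (\<gamma> (k*n+(j*m+q)) * W j i) (Y (k*n+(j*m+q))))"
proof -
  interpret vector_space sc by (rule vs)
  have "(\<Sum>c<k*n+k*m. sc (\<gamma> c * cnj (Vbig k n m U W (i*(n+m)+(n+q)) c)) (Y c))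
      = (\<Sum>j<k. sc (\<gamma> (k*n+(j*m+q)) * cnj (Vbig k n m U W (i*(n+m)+(n+q)) (k*n+(j*m+q)))) (Y (k*n+(j*m+q))))"
    by (rule sum_rowC[OF assms(2)]) (simp_all add: assms VCA VCC)
  also have "\<dots> = (\<Sum>j<k. sc (\<gamma> (k*n+(j*m+q)) * W j i) (Y (k*n+(j*m+q))))"
    by (rule sum.cong) (simp_all add: assms VCC)
  finally show ?thesis .
qed

end


lemma conj_X:
  fixes sc :: "complex \<Rightarrow> 'v::ab_group_add \<Rightarrow> 'v"
  assumes vs: "vector_space sc" and U: "uni k U" and W: "uni k W"
    and d: "mm k (mm k (ad U) Z) W = dgm k d"
  shows "conj_by sc (k*n+k*m) (Vbig k n m U W) (upper (k*n) (k*m) (kron_id k n a) (kron sc k n m Z b) (kron_id k m c))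
       = bdiag (n+m) k (\<lambda>i. upper n m a (\<lambda>p q. sc (d i) (b p q)) c)"
proof (intro ext)
  interpret vector_space sc by (rule vs)
  fix r r'
  let ?V = "Vbig k n m U W"
  let ?X = "upper (k*n) (k*m) (kron_id k n a) (kron sc k n m Z b) (kron_id k m c)"
  let ?N = "k*n+k*m"
  let ?B = "\<lambda>i. upper n m a (\<lambda>p q. sc (d i) (b p q)) c"
  have NN: "k*(n+m) = ?N" by (simp add: distrib_left)
  have dd: "(\<Sum>j'<k. \<Sum>j<k. cnj (U j i) * W j' i' * Z j j') = (if i = i' then d i else 0)"
    if "i < k" "i' < k" for i i'
  proof -
    have "mm k (mm k (ad U) Z) W i i' = dgm k d i i'" using d by simp
    then have "(\<Sum>j'<k. (\<Sum>j<k. cnj (U j i) * Z j j') * W j' i') = (if i = i' then d i else 0)"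
      using that by (simp add: mm_def ad_def dgm_def)
    moreover have "(\<Sum>j'<k. \<Sum>j<k. cnj (U j i) * W j' i' * Z j j') = (\<Sum>j'<k. (\<Sum>j<k. cnj (U j i) * Z j j') * W j' i')"
      unfolding sum_distrib_right by (intro sum.cong refl) (simp add: mult_ac)
    ultimately show ?thesis by simp
  qed
  show "conj_by sc ?N ?V ?X r r' = bdiag (n+m) k ?B r r'"
  proof (cases "r < ?N \<and> r' < ?N")
    case False then show ?thesis by (auto simp: conj_by_def bdiag_def NN)
  next
    case True
    then have rr: "r < k*(n+m)" "r' < k*(n+m)" using NN by auto
    have e: "conj_by sc ?N ?V ?X r r' = (\<Sum>c<?N. \<Sum>c'<?N. sc (?V r c * cnj (?V r' c')) (?X c c'))"
      using True by (simp add: conj_by_def)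
    show ?thesis
    proof (rule idx_cases2[OF rr(1)])
      fix i p assume ip: "i < k" "p < n" "r = i*(n+m)+p"
      show ?thesis
      proof (rule idx_cases2[OF rr(2)])
        fix i' p' assume ip': "i' < k" "p' < n" "r' = i'*(n+m)+p'"
        have "(\<Sum>c<?N. \<Sum>c'<?N. sc (?V r c * cnj (?V r' c')) (?X c c'))
            = (\<Sum>c<?N. \<Sum>j'<k. sc (?V r c * U j' i') (?X c (j'*n+p')))"
          unfolding ip'(3) by (intro sum.cong refl rowA_red'[OF vs ip'(1,2)])
        also have "\<dots> = (\<Sum>j'<k. \<Sum>c<?N. sc (?V r c * U j' i') (?X c (j'*n+p')))" by (rule sum.swap)
        also have "\<dots> = (\<Sum>j'<k. \<Sum>j<k. sc (cnj (U j i) * U j' i') (?X (j*n+p) (j'*n+p')))"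
          unfolding ip(3) by (intro sum.cong refl rowA_red[OF vs ip(1,2)])
        also have "\<dots> = (\<Sum>j'<k. \<Sum>j<k. sc (cnj (U j i) * U j' i') (if j = j' then a p p' else 0))"
          by (intro sum.cong refl) (simp add: XAA ip ip')
        also have "\<dots> = (\<Sum>j'<k. sc (cnj (U j' i) * U j' i') (a p p'))"
          by (intro sum.cong refl) (simp add: if_distrib[of "sc _"] sum.delta cong: if_cong)
        also have "\<dots> = sc (\<Sum>j'<k. cnj (U j' i) * U j' i') (a p p')" by (simp add: scale_sum_left)
        also have "\<dots> = (if i = i' then a p p' else 0)" using uniD1[OF U ip(1) ip'(1)] by simp
        also have "\<dots> = bdiag (n+m) k ?B r r'"
          using ip ip' by (simp add: bdiag_enc upper_def)
        finally show ?thesis using e by simp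
      next
        fix i' q' assume iq': "i' < k" "q' < m" "r' = i'*(n+m)+(n+q')"
        have "(\<Sum>c<?N. \<Sum>c'<?N. sc (?V r c * cnj (?V r' c')) (?X c c'))
            = (\<Sum>c<?N. \<Sum>j'<k. sc (?V r c * W j' i') (?X c (k*n+(j'*m+q'))))"
          unfolding iq'(3) by (intro sum.cong refl rowC_red'[OF vs iq'(1,2)])
        also have "\<dots> = (\<Sum>j'<k. \<Sum>c<?N. sc (?V r c * W j' i') (?X c (k*n+(j'*m+q'))))" by (rule sum.swap)
        also have "\<dots> = (\<Sum>j'<k. \<Sum>j<k. sc (cnj (U j i) * W j' i') (?X (j*n+p) (k*n+(j'*m+q'))))"
          unfolding ip(3) by (intro sum.cong refl rowA_red[OF vs ip(1,2)])
        also have "\<dots> = (\<Sum>j'<k. \<Sum>j<k. sc (cnj (U j i) * W j' i' * Z j j') (b p q'))"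
          by (intro sum.cong refl) (simp add: XAC ip iq')
        also have "\<dots> = sc (\<Sum>j'<k. \<Sum>j<k. cnj (U j i) * W j' i' * Z j j') (b p q')" by (simp add: scale_sum_left)
        also have "\<dots> = (if i = i' then sc (d i) (b p q') else 0)" using dd[OF ip(1) iq'(1)] by simp
        also have "\<dots> = bdiag (n+m) k ?B r r'"
          using ip iq' bdiag_enc[of i k i' p "n+m" "n+q'" ?B] by (simp add: upper_def)
        finally show ?thesis using e by simp
      qed
    next
      fix i q assume iq: "i < k" "q < m" "r = i*(n+m)+(n+q)"
      show ?thesis
      proof (rule idx_cases2[OF rr(2)])
        fix i' p' assume ip': "i' < k" "p' < n" "r' = i'*(n+m)+p'"
        have "(\<Sum>c<?N. \<Sum>c'<?N. sc (?V r c * cnj (?V r' c')) (?X c c'))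
            = (\<Sum>c<?N. \<Sum>j'<k. sc (?V r c * U j' i') (?X c (j'*n+p')))"
          unfolding ip'(3) by (intro sum.cong refl rowA_red'[OF vs ip'(1,2)])
        also have "\<dots> = (\<Sum>j'<k. \<Sum>c<?N. sc (?V r c * U j' i') (?X c (j'*n+p')))" by (rule sum.swap)
        also have "\<dots> = (\<Sum>j'<k. \<Sum>j<k. sc (cnj (W j i) * U j' i') (?X (k*n+(j*m+q)) (j'*n+p')))"
          unfolding iq(3) by (intro sum.cong refl rowC_red[OF vs iq(1,2)])
        also have "\<dots> = 0"
          by (intro sum.neutral ballI) (simp add: XCA iq ip')
        also have "\<dots> = bdiag (n+m) k ?B r r'"
          using iq ip' bdiag_enc[of i k i' "n+q" "n+m" p' ?B] by (simp add: upper_def)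
        finally show ?thesis using e by simp
      next
        fix i' q' assume iq': "i' < k" "q' < m" "r' = i'*(n+m)+(n+q')"
        have "(\<Sum>c<?N. \<Sum>c'<?N. sc (?V r c * cnj (?V r' c')) (?X c c'))
            = (\<Sum>c<?N. \<Sum>j'<k. sc (?V r c * W j' i') (?X c (k*n+(j'*m+q'))))"
          unfolding iq'(3) by (intro sum.cong refl rowC_red'[OF vs iq'(1,2)])
        also have "\<dots> = (\<Sum>j'<k. \<Sum>c<?N. sc (?V r c * W j' i') (?X c (k*n+(j'*m+q'))))" by (rule sum.swap)
        also have "\<dots> = (\<Sum>j'<k. \<Sum>j<k. sc (cnj (W j i) * W j' i') (?X (k*n+(j*m+q)) (k*n+(j'*m+q'))))"
          unfolding iq(3) by (intro sum.cong refl rowC_red[OF vs iq(1,2)])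
        also have "\<dots> = (\<Sum>j'<k. \<Sum>j<k. sc (cnj (W j i) * W j' i') (if j = j' then c q q' else 0))"
          by (intro sum.cong refl) (simp add: XCC iq iq')
        also have "\<dots> = (\<Sum>j'<k. sc (cnj (W j' i) * W j' i') (c q q'))"
          by (intro sum.cong refl) (simp add: if_distrib[of "sc _"] sum.delta cong: if_cong)
        also have "\<dots> = sc (\<Sum>j'<k. cnj (W j' i) * W j' i') (c q q')" by (simp add: scale_sum_left)
        also have "\<dots> = (if i = i' then c q q' else 0)" using uniD1[OF W iq(1) iq'(1)] by simp
        also have "\<dots> = bdiag (n+m) k ?B r r'"
          using iq iq' bdiag_enc[of i k i' "n+q" "n+m" "n+q'" ?B] by (simp add: upper_def)
        finally show ?thesis using e by simp
      qed
    qed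
  qed
qed


lemma bdiag_one: "B 0 \<in> mats N0 N0 \<Longrightarrow> bdiag N0 (Suc 0) B = B 0"
  by (auto simp: bdiag_def mats_def fun_eq_iff)

lemma bdiag_Suc:
  assumes "0 < N0" "B 0 \<in> mats N0 N0"
  shows "bdiag N0 (Suc k) B = dsum N0 (k*N0) (B 0) (bdiag N0 k (\<lambda>i. B (Suc i)))"
proof (intro ext)
  fix r r'
  show "bdiag N0 (Suc k) B r r' = dsum N0 (k*N0) (B 0) (bdiag N0 k (\<lambda>i. B (Suc i))) r r'"
  proof (cases "r < N0")
    case True
    show ?thesis
    proof (cases "r' < N0")
      case True
      then show ?thesis using \<open>r < N0\<close> by (simp add: bdiag_def dsum_def upper_def)
    next
      case False
      have "r div N0 = 0" using True by simp
      moreover have "r' div N0 \<noteq> 0" using False assms(1) by (simp add: div_eq_0_iff)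
      ultimately show ?thesis using True False by (auto simp: bdiag_def dsum_def upper_def)
    qed
  next
    case False
    have rd: "r div N0 = Suc ((r - N0) div N0)" "r mod N0 = (r - N0) mod N0"
      using False assms(1) by (simp_all add: le_div_geq le_mod_geq)
    show ?thesis
    proof (cases "r' < N0")
      case True
      have "r' div N0 = 0" using True by simp
      then show ?thesis using True False rd by (auto simp: bdiag_def dsum_def upper_def)
    next
      case False
      have rd': "r' div N0 = Suc ((r' - N0) div N0)" "r' mod N0 = (r' - N0) mod N0"
        using False assms(1) by (simp_all add: le_div_geq le_mod_geq)
      have "r < Suc k * N0 \<longleftrightarrow> r - N0 < k * N0" using \<open>\<not> r < N0\<close> by auto
      moreover have "r' < Suc k * N0 \<longleftrightarrow> r' - N0 < k * N0" using False by auto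
      ultimately show ?thesis using False \<open>\<not> r < N0\<close> rd rd'
        by (auto simp: bdiag_def dsum_def upper_def)
    qed
  qed
qed

lemma bdiag_mats: "bdiag N0 k B \<in> mats (k*N0) (k*N0)"
  by (simp add: bdiag_def mats_def)

lemma bdiag_D:
  assumes nc: "nc_set D" and P3: "P3 D" and N0: "1 \<le> N0" and Bm: "\<And>i. B i \<in> mats N0 N0" and k: "1 \<le> k"
  shows "bdiag N0 k B \<in> D (k*N0) \<longleftrightarrow> (\<forall>i<k. B i \<in> D N0)"
  using k Bm
proof (induction k arbitrary: B rule: nat_induct_at_least)
  case base
  then show ?case by (simp add: bdiag_one)
next
  case (Suc k)
  have eq: "bdiag N0 (Suc k) B = dsum N0 (k*N0) (B 0) (bdiag N0 k (\<lambda>i. B (Suc i)))"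
    using N0 Suc.prems by (intro bdiag_Suc) auto
  have kN: "1 \<le> k*N0" using Suc.hyps N0 by simp
  have IH: "bdiag N0 k (\<lambda>i. B (Suc i)) \<in> D (k*N0) \<longleftrightarrow> (\<forall>i<k. B (Suc i) \<in> D N0)"
    using Suc.IH[of "\<lambda>i. B (Suc i)"] Suc.prems by simp
  have "bdiag N0 (Suc k) B \<in> D (Suc k * N0) \<longleftrightarrow> dsum N0 (k*N0) (B 0) (bdiag N0 k (\<lambda>i. B (Suc i))) \<in> D (N0 + k*N0)"
    by (simp add: eq)
  also have "\<dots> \<longleftrightarrow> B 0 \<in> D N0 \<and> bdiag N0 k (\<lambda>i. B (Suc i)) \<in> D (k*N0)"
  proof
    assume "dsum N0 (k*N0) (B 0) (bdiag N0 k (\<lambda>i. B (Suc i))) \<in> D (N0 + k*N0)"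
    then show "B 0 \<in> D N0 \<and> bdiag N0 k (\<lambda>i. B (Suc i)) \<in> D (k*N0)"
      using P3 N0 kN Suc.prems bdiag_mats unfolding P3_def by blast
  next
    assume "B 0 \<in> D N0 \<and> bdiag N0 k (\<lambda>i. B (Suc i)) \<in> D (k*N0)"
    then show "dsum N0 (k*N0) (B 0) (bdiag N0 k (\<lambda>i. B (Suc i))) \<in> D (N0 + k*N0)"
      using nc N0 kN unfolding nc_set_def by blast
  qed
  also have "\<dots> \<longleftrightarrow> (\<forall>i<Suc k. B i \<in> D N0)"
    using IH by (auto simp: less_Suc_eq_0_disj)
  finally show ?case .
qed


lemma uni_unitary: assumes "uni N V" shows "unitary_mat N V"
proof -
  have "mm N V (ad V) = idm N" using assms by (simp add: uni_def)
  then show ?thesis unfolding unitary_mat_def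
    by (auto simp: mm_def ad_def idm_def fun_eq_iff split: if_splits dest: fun_cong)
qed

lemma upper_mats: "upper n m A B C \<in> mats (n+m) (n+m)"
  by (simp add: upper_def mats_def)

lemma mm_scale_right: "mm k A (\<lambda>i j. c * B i j) = (\<lambda>i j. c * mm k A B i j)"
  by (auto simp: mm_def fun_eq_iff sum_distrib_left mult_ac)

lemma mm_scale_left: "mm k (\<lambda>i j. c * A i j) B = (\<lambda>i j. c * mm k A B i j)"
  by (auto simp: mm_def fun_eq_iff sum_distrib_left mult_ac)

lemma opnorm_cong: assumes "\<And>i j. i < k \<Longrightarrow> j < k \<Longrightarrow> M i j = M' i j"
  shows "opnorm k M = opnorm k M'"
proof -
  have "cvnorm k (mat_vec k M x) = cvnorm k (mat_vec k M' x)" for x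
    using assms by (simp add: cvnorm_def mat_vec_def)
  then show ?thesis by (simp add: opnorm_def)
qed

lemma kron_trunc_scale:
  fixes sc :: "complex \<Rightarrow> 'v::ab_group_add \<Rightarrow> 'v"
  assumes vs: "vector_space sc"
  shows "(\<lambda>i j. sc t (kron sc k n m Z b i j))
     = kron sc k n m (\<lambda>i j. t * (if i < k \<and> j < k then Z i j else 0)) b"
proof -
  interpret vector_space sc by (rule vs)
  show ?thesis
  proof (intro ext)
    fix i j
    show "sc t (kron sc k n m Z b i j) = kron sc k n m (\<lambda>i j. t * (if i < k \<and> j < k then Z i j else 0)) b i j"
    proof (cases "i < k*n \<and> j < k*m")
      case True
      then have "i div n < k" "j div m < k" by (auto intro: less_mult_imp_div_less)
      then show ?thesis using True by (simp add: kron_def)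
    next
      case False then show ?thesis by (auto simp: kron_def)
    qed
  qed
qed


lemma key_equiv:
  fixes sc :: "complex \<Rightarrow> 'v::ab_group_add \<Rightarrow> 'v"
    and D :: "nat \<Rightarrow> (nat \<Rightarrow> nat \<Rightarrow> 'v) set"
  assumes vs: "vector_space sc" and nc: "nc_set D" and P2: "P2 sc D" and P3: "P3 D"
    and n: "1 \<le> n" and m: "1 \<le> m" and k: "1 \<le> k"
    and U: "uni k U" and W: "uni k W"
    and d: "mm k (mm k (ad U) (\<lambda>i j. if i < k \<and> j < k then Z i j else 0)) W = dgm k (\<lambda>i. complex_of_real (\<sigma> i))"
  shows "upper (k*n) (k*m) (kron_id k n a) (\<lambda>i j. sc (complex_of_real t) (kron sc k n m Z b i j)) (kron_id k m c) \<in> D (k*n + k*m)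
     \<longleftrightarrow> (\<forall>i<k. upper n m a (\<lambda>p q. sc (complex_of_real (t * \<sigma> i)) (b p q)) c \<in> D (n+m))"
proof -
  interpret vector_space sc by (rule vs)
  let ?Zt = "\<lambda>i j. complex_of_real t * (if i < k \<and> j < k then Z i j else 0)"
  let ?X = "upper (k*n) (k*m) (kron_id k n a) (kron sc k n m ?Zt b) (kron_id k m c)"
  let ?V = "Vbig k n m U W"
  let ?N = "k*n + k*m"
  have N1: "1 \<le> ?N" using n m k by (simp add: add_increasing2)
  have NN: "k*(n+m) = ?N" by (simp add: distrib_left)
  have eqX: "upper (k*n) (k*m) (kron_id k n a) (\<lambda>i j. sc (complex_of_real t) (kron sc k n m Z b i j)) (kron_id k m c) = ?X"
    by (simp only: kron_trunc_scale[OF vs])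
  have dt: "mm k (mm k (ad U) ?Zt) W = dgm k (\<lambda>i. complex_of_real (t * \<sigma> i))"
    by (simp add: mm_scale_right mm_scale_left d dgm_def fun_eq_iff)
  have uV: "uni ?N ?V" by (rule Vbig_uni[OF U W])
  have cX: "conj_by sc ?N ?V ?X = bdiag (n+m) k (\<lambda>i. upper n m a (\<lambda>p q. sc (complex_of_real (t * \<sigma> i)) (b p q)) c)"
    by (rule conj_X[OF vs U W dt])
  have Xm: "?X \<in> mats ?N ?N" by (rule upper_mats)
  have "?X \<in> D ?N \<longleftrightarrow> conj_by sc ?N ?V ?X \<in> D ?N"
  proof
    assume "?X \<in> D ?N"
    then show "conj_by sc ?N ?V ?X \<in> D ?N" using P2 N1 uni_unitary[OF uV] unfolding P2_def by blast
  next
    assume "conj_by sc ?N ?V ?X \<in> D ?N"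
    then have "conj_by sc ?N (ad ?V) (conj_by sc ?N ?V ?X) \<in> D ?N"
      using P2 N1 uni_unitary[OF uni_ad[OF uV]] unfolding P2_def by blast
    then show "?X \<in> D ?N" by (simp add: conj_inv[OF vs uV Xm])
  qed
  also have "\<dots> \<longleftrightarrow> bdiag (n+m) k (\<lambda>i. upper n m a (\<lambda>p q. sc (complex_of_real (t * \<sigma> i)) (b p q)) c) \<in> D (k*(n+m))"
    unfolding cX NN ..
  also have "\<dots> \<longleftrightarrow> (\<forall>i<k. upper n m a (\<lambda>p q. sc (complex_of_real (t * \<sigma> i)) (b p q)) c \<in> D (n+m))"
    by (rule bdiag_D[OF nc P3 _ _ k]) (use n in \<open>auto simp: upper_mats\<close>)
  finally show ?thesis unfolding eqX .
qed


lemma sup_scale: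
  fixes G :: "real \<Rightarrow> bool" and \<sigma> :: "nat \<Rightarrow> real"
  assumes k: "1 \<le> k" and s0: "\<And>i. 0 \<le> \<sigma> i" and G0: "G 0"
  defines "sm \<equiv> Max (\<sigma> ` {..<k})"
  shows "inverse (Sup {t::ennreal. \<forall>s::real. 0 \<le> s \<and> ennreal s \<le> t \<longrightarrow> (\<forall>i<k. G (s * \<sigma> i))})
       = emult (inverse (Sup {t::ennreal. \<forall>s::real. 0 \<le> s \<and> ennreal s \<le> t \<longrightarrow> G s})) (ennreal sm)"
proof -
  define A where "A = {t::ennreal. \<forall>s::real. 0 \<le> s \<and> ennreal s \<le> t \<longrightarrow> G s}"
  define Ab where "Ab = {t::ennreal. \<forall>s::real. 0 \<le> s \<and> ennreal s \<le> t \<longrightarrow> (\<forall>i<k. G (s * \<sigma> i))}"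
  have fin: "finite (\<sigma> ` {..<k})" "\<sigma> ` {..<k} \<noteq> {}" using k by (auto simp: lessThan_empty_iff)
  have smax: "\<And>i. i < k \<Longrightarrow> \<sigma> i \<le> sm" unfolding sm_def using fin by auto
  obtain im where im: "im < k" "\<sigma> im = sm" unfolding sm_def using Max_in[OF fin] by auto
  have sm0: "0 \<le> sm" using s0 im by metis
  have em: "emult x (ennreal sm) = x * ennreal sm" for x by (simp add: emult_def)
  show ?thesis
  proof (cases "sm = 0")
    case True
    then have "\<And>i. i < k \<Longrightarrow> \<sigma> i = 0" using smax s0 by (metis order_antisym)
    then have "Ab = UNIV" using G0 by (auto simp: Ab_def)
    then show ?thesis using True by (simp add: Ab_def[symmetric] emult_def)
  next
    case False
    then have smp: "sm > 0" using sm0 by simp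
    define c where "c = ennreal (1 / sm)"
    have c1: "ennreal sm * c = 1" using smp by (simp add: c_def ennreal_mult[symmetric])
    have c1': "c * ennreal sm = 1" using c1 by (simp add: mult.commute)
    have AbA: "Ab = (\<lambda>u. u * c) ` A"
    proof
      show "Ab \<subseteq> (\<lambda>u. u * c) ` A"
      proof
        fix t assume t: "t \<in> Ab"
        have "t * ennreal sm \<in> A"
          unfolding A_def
        proof (intro CollectI allI impI)
          fix r :: real assume r: "0 \<le> r \<and> ennreal r \<le> t * ennreal sm"
          define s where "s = r / sm"
          have s: "0 \<le> s" using r smp by (simp add: s_def)
          have "ennreal s * ennreal sm = ennreal r" using smp r by (simp add: s_def ennreal_mult[symmetric])
          then have "ennreal sm * ennreal s \<le> ennreal sm * t" using r by (simp add: mult.commute)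
          then have "ennreal s \<le> t" using smp by (subst (asm) ennreal_mult_le_mult_iff) auto
          then have "G (s * \<sigma> im)" using t s im(1) by (auto simp: Ab_def)
          then show "G r" using im smp by (simp add: s_def)
        qed
        moreover have "t = (t * ennreal sm) * c" by (simp add: mult.assoc c1)
        ultimately show "t \<in> (\<lambda>u. u * c) ` A" by blast
      qed
    next
      show "(\<lambda>u. u * c) ` A \<subseteq> Ab"
      proof
        fix t assume "t \<in> (\<lambda>u. u * c) ` A"
        then obtain u where u: "u \<in> A" "t = u * c" by blast
        show "t \<in> Ab" unfolding Ab_def
        proof (intro CollectI allI impI)
          fix s :: real and i assume s: "0 \<le> s \<and> ennreal s \<le> t" and i: "i < k"
          have "ennreal (s * \<sigma> i) = ennreal s * ennreal (\<sigma> i)" using s s0 by (simp add: ennreal_mult)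
          also have "\<dots> \<le> t * ennreal sm" using s smax[OF i] by (intro mult_mono ennreal_leI) auto
          also have "\<dots> = u" using u by (simp add: mult.assoc c1')
          finally show "G (s * \<sigma> i)" using u s s0[of i] by (auto simp: A_def)
        qed
      qed
    qed
    have "Sup Ab = (SUP u\<in>A. u * c)" unfolding AbA ..
    also have "\<dots> = (SUP u\<in>A. u) * c" by (rule SUP_mult_right_ennreal[symmetric])
    finally have "Sup Ab = Sup A * c" by simp
    then have "inverse (Sup Ab) = inverse (Sup A) * inverse c"
      using smp by (simp add: c_def ennreal_inverse_mult')
    also have "inverse c = ennreal sm" using smp by (simp add: c_def inverse_ennreal)
    finally show ?thesis by (simp add: Ab_def[symmetric] A_def[symmetric] em)
  qed
qed


theorem lemma3p4:
  fixes sc :: "complex \<Rightarrow> 'v::{ab_group_add,topological_space} \<Rightarrow> 'v"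
    and D :: "nat \<Rightarrow> (nat \<Rightarrow> nat \<Rightarrow> 'v) set"
    and Z :: "nat \<Rightarrow> nat \<Rightarrow> complex"
  assumes "ctvs sc"
    and "nc_set D" and "P2 sc D" and "P3 D"
    and "1 \<le> n" and "1 \<le> m" and "1 \<le> k"
    and "a \<in> D n" and "c \<in> D m" and "b \<in> mats n m"
  shows "delta sc D (k * n) (k * m) (kron_id k n a) (kron_id k m c) (kron sc k n m Z b)
       = emult (delta sc D n m a c b) (ennreal (sqrt (opnorm k (mult_adj k Z))))"
proof -
  have vs: "vector_space sc" using assms(1) by (simp add: ctvs_def)
  interpret vector_space sc by (rule vs)
  note nc = assms(2) and P2 = assms(3) and P3 = assms(4) and n = assms(5) and m = assms(6) and k = assms(7)
  define Zc where "Zc = (\<lambda>i j. if i < k \<and> j < k then Z i j else 0)"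
  have Zcm: "Zc \<in> mats k k" by (simp add: Zc_def mats_def)
  obtain U W \<sigma> where U: "uni k U" and W: "uni k W" and s0: "\<forall>i. 0 \<le> \<sigma> i"
    and d: "mm k (mm k (ad U) Zc) W = dgm k (\<lambda>i. complex_of_real (\<sigma> i))"
    using svd[OF Zcm] by blast
  define sm where "sm = Max (\<sigma> ` {..<k})"
  have "opnorm k (mult_adj k Z) = opnorm k (mult_adj k Zc)"
    by (rule opnorm_cong) (simp add: mult_adj_def Zc_def)
  also have "\<dots> = sm\<^sup>2" unfolding sm_def by (rule opnorm_svd[OF Zcm k U W s0 d])
  finally have on: "opnorm k (mult_adj k Z) = sm\<^sup>2" .
  have "\<sigma> 0 \<le> sm" unfolding sm_def using k by (intro Max_ge) auto
  then have sm0: "0 \<le> sm" using s0 by (metis order_trans)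
  have sq: "sqrt (opnorm k (mult_adj k Z)) = sm" using on sm0 by simp
  define G where "G t = (upper n m a (\<lambda>i j. sc (complex_of_real t) (b i j)) c \<in> D (n+m))" for t
  have "upper n m a (\<lambda>i j. sc (complex_of_real 0) (b i j)) c = dsum n m a c"
    by (simp add: dsum_def)
  then have G0: "G 0" using nc n m assms(8,9) unfolding G_def nc_set_def by auto
  have key: "(upper (k*n) (k*m) (kron_id k n a) (\<lambda>i j. sc (complex_of_real t) (kron sc k n m Z b i j)) (kron_id k m c) \<in> D (k*n + k*m))
      \<longleftrightarrow> (\<forall>i<k. G (t * \<sigma> i))" for t
    unfolding G_def by (rule key_equiv[OF vs nc P2 P3 n m k U W d[unfolded Zc_def]])
  have "delta sc D (k * n) (k * m) (kron_id k n a) (kron_id k m c) (kron sc k n m Z b)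
      = inverse (Sup {t::ennreal. \<forall>s::real. 0 \<le> s \<and> ennreal s \<le> t \<longrightarrow> (\<forall>i<k. G (s * \<sigma> i))})"
    unfolding delta_def key ..
  also have "\<dots> = emult (inverse (Sup {t::ennreal. \<forall>s::real. 0 \<le> s \<and> ennreal s \<le> t \<longrightarrow> G s})) (ennreal sm)"
    unfolding sm_def by (rule sup_scale[of k \<sigma> G, OF k _ G0]) (use s0 in auto)
  also have "\<dots> = emult (delta sc D n m a c b) (ennreal (sqrt (opnorm k (mult_adj k Z))))"
    unfolding sq delta_def G_def ..
  finally show ?thesis .
qed


end
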